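(* Let $f$ be a strategy-proof SCF and $G$ a gradual mechanism implementing $f$. Then $G$ is incentive compatible if and only if $G$ is reaction-proof.
   Context: Setting. $N$ finite set of agents, $X$ finite set of outcomes, finite type spaces $\Theta_i$, each type $\theta_i$ inducing a complete transitive preference $R(\theta_i)$ on $X$; $\Theta=\prod_i\Theta_i$. An SCF $f:\Theta\to X$ is strategy-proof if $f(\theta_i,\theta_{-i})\,R(\theta_i)\,f(\theta_i',\theta_{-i})$ for all $i,\theta_i,\theta_i',\theta_{-i}$. Dynamic game forms. A dynamic game form with perfect recall consists of a finite tree $\bar H$ of histories (finite sequences of action profiles) containing the empty initial history $\varnothing$, closed under prefixes ($\preceq$ prefix order, $\prec$ strict); terminal histories $Z$, non-terminal $H$; at each $h\in H$ a nonempty set $\mathbb P(h)$ of agents move simultaneously with available actions $A_i(h)$, all action profiles leading to successors; $\mathbb P(\varnothing)=N$; each agent's decision nodes $H_i$ are partitioned into information sets $\boldsymbol H_i$, with available actions constant on information sets and perfect recall; $\mathcal X:Z\to X$. For information sets of $i$, $\boldsymbol h_i\prec\bar{\boldsymbol h}_i$ if $h\prec\bar h$ for some $h\in\boldsymbol h_i,\bar h\in\bar{\boldsymbol h}_i$; $\bar{\boldsymbol h}_i$ is an immediate successor of $\boldsymbol h_i$ if $\boldsymbol h_i\prec\bar{\boldsymbol h}_i$ and no information set of $i$ lies strictly between them. Strategies choose an available action at each information set; $s_M$ denotes a profile for agents in $M$ ($s_{-i}$, $s_{-i,j}$ for agents other than $i$, other than $i,j$); a complete profile $s$ determines $z(s)$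 and $\mathcal X(s)=\mathcal X(z(s))$. Gradual mechanisms. A GM implementing $f$ is such a game form in which (1) actions of $i$ are nonempty subsets of $\Theta_i$; (2) at every $h\in H_i$ the available actions of $i$ are pairwise disjoint with union $\Theta_i(h)$, where for any history $h$, $\Theta_i(h)$ is the last action of $i$ in $h$ ($\Theta_i$ if $i$ has not acted); (3) $\mathcal X(z)=f(\theta)$ for all $z\in Z$, $\theta\in\Theta(z)=\prod_i\Theta_i(z)$. For a history $h$, $\Theta(h)=\prod_i\Theta_i(h)$; for an information set, $\Theta_i(\boldsymbol h_i)=\Theta_i(h)$ for $h\in\boldsymbol h_i$. Consistency. A history $h$ is consistent with $s_M$ ($M\subsetneq N$) if $h\preceq z(s_M,s_{N\setminus M})$ for some $s_{N\setminus M}$; a type profile $\theta$ is consistent with $s_M$ if the unique $z\in Z$ with $\theta\in\Theta(z)$ is. Incentive compatibility. $s_i$ is unconditional for $\theta_i$ if $\theta_i\in s_i(h)$ for every $h\in H_i$ with $\theta_i\in\Theta_i(h)$ (denoted $s_{\theta_i}$). The GM is incentive compatible if $\mathcal X(s_{\theta_i},s_{-i})\,R(\theta_i)\,\mathcal X(s_i,s_{-i})$ for all $i,\theta_i$, unconditional $s_{\theta_i}$, $s_i$, $s_{-i}$. Reaction-proofness. A GM $G$ implementing $f$ is reaction-proof if for any two distinct agents $i,j\in N$, any pair of distinct information sets $\boldsymbol h_i^1,\boldsymbol h_i^2$ of $i$ that are immediate successors of a common information set $\boldsymbol h_i$ of $i$ with $\Theta_i(\boldsymbol h_i^1)=\Theta_i(\boldsymbol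 h_i^2)$, and any histories $h^1\in\boldsymbol h_i^1$, $h^2\in\boldsymbol h_i^2$ that are both consistent with a common strategy profile $s_{-i,j}$, we have $f(\theta^1)\,R(\theta_j^1)\,f(\theta^2)$ for all $\theta^1\in\Theta(h^1)$ and $\theta^2\in\Theta(h^2)$ that are consistent with $s_{-i,j}$. *)

theory Defs
  imports Main "HOL-Library.Sublist" "HOL-Library.Disjoint_Sets"
begin

text \<open>Agents have type 'i, types (of all agents) live in a common type 't,
 outcomes have type 'x.
 Preferences: R th a b means a R(th) b (a weakly preferred to b by type th).\<close>

definition setting :: "'i set \<Rightarrow> 'x set \<Rightarrow> ('i \<Rightarrow> 't set) \<Rightarrow> ('t \<Rightarrow> 'x \<Rightarrow> 'x \<Rightarrow> bool) \<Rightarrow> bool" where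
  "setting N X Theta R \<longleftrightarrow> finite N \<and> finite X \<and> (\<forall>i\<in>N. finite (Theta i)) \<and>
     (\<forall>i\<in>N. \<forall>th\<in>Theta i.
        (\<forall>a\<in>X. \<forall>b\<in>X. R th a b \<or> R th b a) \<and>
        (\<forall>a\<in>X. \<forall>b\<in>X. \<forall>c\<in>X. R th a b \<longrightarrow> R th b c \<longrightarrow> R th a c))"

definition scf :: "'i set \<Rightarrow> 'x set \<Rightarrow> ('i \<Rightarrow> 't set) \<Rightarrow> (('i \<Rightarrow> 't) \<Rightarrow> 'x) \<Rightarrow> bool" where
  "scf N X Theta f \<longleftrightarrow> (\<forall>th\<in>PiE N Theta. f th \<in> X)"

definition strategy_proof :: "'i set \<Rightarrow> ('i \<Rightarrow> 't set) \<Rightarrow> ('t \<Rightarrow> 'x \<Rightarrow> 'x \<Rightarrow> bool) \<Rightarrow> (('i \<Rightarrow> 't) \<Rightarrow> 'x) \<Rightarrow> bool" where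
  "strategy_proof N Theta R f \<longleftrightarrow>
     (\<forall>i\<in>N. \<forall>th\<in>PiE N Theta. \<forall>t'\<in>Theta i. R (th i) (f th) (f (th(i := t'))))"

text \<open>Histories: finite sequences of action profiles.  An action profile assigns
 to each mover an action (in a gradual mechanism, a set of types) and None to non-movers.\<close>
type_synonym ('i,'t) hist = "('i \<Rightarrow> 't set option) list"
type_synonym ('i,'t) infoset = "('i,'t) hist set"
type_synonym ('i,'t) strat = "('i,'t) infoset \<Rightarrow> 't set"

record ('i,'t,'x) gform =
  hists :: "('i,'t) hist set"
  movers :: "('i,'t) hist \<Rightarrow> 'i set"
  acts :: "'i \<Rightarrow> ('i,'t) hist \<Rightarrow> 't set set"
  infos :: "'i \<Rightarrow> ('i,'t) infoset set"
  outc :: "('i,'t) hist \<Rightarrow> 'x"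

definition terminal :: "('i,'t,'x) gform \<Rightarrow> ('i,'t) hist set" where
  "terminal G = {h \<in> hists G. \<not> (\<exists>h'\<in>hists G. strict_prefix h h')}"

definition nonterm :: "('i,'t,'x) gform \<Rightarrow> ('i,'t) hist set" where
  "nonterm G = hists G - terminal G"

definition decnodes :: "('i,'t,'x) gform \<Rightarrow> 'i \<Rightarrow> ('i,'t) hist set" where
  "decnodes G i = {h \<in> nonterm G. i \<in> movers G h}"

definition infoset_of :: "('i,'t,'x) gform \<Rightarrow> 'i \<Rightarrow> ('i,'t) hist \<Rightarrow> ('i,'t) infoset" where
  "infoset_of G i h = (THE I. I \<in> infos G i \<and> h \<in> I)"

text \<open>Experience of i along h: the sequence of own information sets visited and
 own actions taken at proper prefixes of h (used to state perfect recall).\<close>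
definition experience :: "('i,'t,'x) gform \<Rightarrow> 'i \<Rightarrow> ('i,'t) hist \<Rightarrow> (('i,'t) infoset \<times> 't set) list" where
  "experience G i h = map (\<lambda>k. (infoset_of G i (take k h), the ((h ! k) i)))
      (filter (\<lambda>k. i \<in> movers G (take k h)) [0..<length h])"

definition game_form :: "'i set \<Rightarrow> ('i,'t,'x) gform \<Rightarrow> bool" where
  "game_form N G \<longleftrightarrow>
     finite (hists G) \<and> [] \<in> hists G \<and>
     (\<forall>h\<in>hists G. \<forall>g. prefix g h \<longrightarrow> g \<in> hists G) \<and>
     [] \<in> nonterm G \<and> movers G [] = N \<and>
     (\<forall>h\<in>nonterm G. movers G h \<noteq> {} \<and> movers G h \<subseteq> N \<and>
        (\<forall>i\<in>movers G h. acts G i h \<noteq> {}) \<and>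
        (\<forall>a. h @ [a] \<in> hists G \<longleftrightarrow>
            (\<forall>i. (i \<in> movers G h \<longrightarrow> (\<exists>x. a i = Some x \<and> x \<in> acts G i h)) \<and>
                 (i \<notin> movers G h \<longrightarrow> a i = None)))) \<and>
     (\<forall>i\<in>N. partition_on (decnodes G i) (infos G i)) \<and>
     (\<forall>i. i \<notin> N \<longrightarrow> infos G i = {}) \<and>
     (\<forall>i\<in>N. \<forall>I\<in>infos G i. \<forall>h\<in>I. \<forall>h'\<in>I. acts G i h = acts G i h') \<and>
     (\<forall>i\<in>N. \<forall>I\<in>infos G i. \<forall>h\<in>I. \<forall>h'\<in>I. experience G i h = experience G i h')"

text \<open>\<open>\<Theta>_i(h)\<close>: last action of i in h, or \<open>\<Theta>_i\<close> if i has not acted.\<close>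
definition thetaH :: "('i \<Rightarrow> 't set) \<Rightarrow> 'i \<Rightarrow> ('i,'t) hist \<Rightarrow> 't set" where
  "thetaH Theta i h = foldl (\<lambda>S a. case a i of None \<Rightarrow> S | Some x \<Rightarrow> x) (Theta i) h"

definition profilesH :: "'i set \<Rightarrow> ('i \<Rightarrow> 't set) \<Rightarrow> ('i,'t) hist \<Rightarrow> ('i \<Rightarrow> 't) set" where
  "profilesH N Theta h = PiE N (\<lambda>i. thetaH Theta i h)"

definition thetaI :: "('i \<Rightarrow> 't set) \<Rightarrow> 'i \<Rightarrow> ('i,'t) infoset \<Rightarrow> 't set" where
  "thetaI Theta i I = thetaH Theta i (SOME h. h \<in> I)"

definition gradual_mechanism ::
  "'i set \<Rightarrow> 'x set \<Rightarrow> ('i \<Rightarrow> 't set) \<Rightarrow> (('i \<Rightarrow> 't) \<Rightarrow> 'x) \<Rightarrow> ('i,'t,'x) gform \<Rightarrow> bool" where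
  "gradual_mechanism N X Theta f G \<longleftrightarrow>
     game_form N G \<and> outc G ` terminal G \<subseteq> X \<and>
     (\<forall>i\<in>N. \<forall>h\<in>decnodes G i.
        (\<forall>a\<in>acts G i h. a \<noteq> {} \<and> a \<subseteq> Theta i) \<and>
        disjoint (acts G i h) \<and> \<Union>(acts G i h) = thetaH Theta i h) \<and>
     (\<forall>z\<in>terminal G. \<forall>th\<in>profilesH N Theta z. outc G z = f th)"

definition valid_strat :: "('i,'t,'x) gform \<Rightarrow> 'i \<Rightarrow> ('i,'t) strat \<Rightarrow> bool" where
  "valid_strat G i s \<longleftrightarrow> (\<forall>I\<in>infos G i. s I \<in> acts G i (SOME h. h \<in> I))"

definition follows :: "('i,'t,'x) gform \<Rightarrow> ('i \<Rightarrow> ('i,'t) strat) \<Rightarrow> ('i,'t) hist \<Rightarrow> bool" where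
  "follows G s h \<longleftrightarrow> (\<forall>k<length h. h ! k =
      (\<lambda>j. if j \<in> movers G (take k h) then Some (s j (infoset_of G j (take k h))) else None))"

definition zpath :: "('i,'t,'x) gform \<Rightarrow> ('i \<Rightarrow> ('i,'t) strat) \<Rightarrow> ('i,'t) hist" where
  "zpath G s = (THE z. z \<in> terminal G \<and> follows G s z)"

text \<open>h is consistent with the partial profile \<open>s_M\<close> (the components of s at agents in M).\<close>
definition consistent :: "'i set \<Rightarrow> ('i,'t,'x) gform \<Rightarrow> 'i set \<Rightarrow> ('i \<Rightarrow> ('i,'t) strat) \<Rightarrow> ('i,'t) hist \<Rightarrow> bool" where
  "consistent N G M s h \<longleftrightarrow>
     (\<exists>s'. (\<forall>i\<in>N. valid_strat G i (s' i)) \<and> (\<forall>i\<in>M. \<forall>I\<in>infos G i. s' i I = s i I) \<and>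
           prefix h (zpath G s'))"

definition consistent_type :: "'i set \<Rightarrow> ('i \<Rightarrow> 't set) \<Rightarrow> ('i,'t,'x) gform \<Rightarrow> 'i set \<Rightarrow> ('i \<Rightarrow> ('i,'t) strat) \<Rightarrow> ('i \<Rightarrow> 't) \<Rightarrow> bool" where
  "consistent_type N Theta G M s th \<longleftrightarrow>
     consistent N G M s (THE z. z \<in> terminal G \<and> th \<in> profilesH N Theta z)"

definition unconditional :: "('i \<Rightarrow> 't set) \<Rightarrow> ('i,'t,'x) gform \<Rightarrow> 'i \<Rightarrow> 't \<Rightarrow> ('i,'t) strat \<Rightarrow> bool" where
  "unconditional Theta G i t s \<longleftrightarrow>
     (\<forall>h\<in>decnodes G i. t \<in> thetaH Theta i h \<longrightarrow> t \<in> s (infoset_of G i h))"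

definition incentive_compatible ::
  "'i set \<Rightarrow> ('i \<Rightarrow> 't set) \<Rightarrow> ('t \<Rightarrow> 'x \<Rightarrow> 'x \<Rightarrow> bool) \<Rightarrow> ('i,'t,'x) gform \<Rightarrow> bool" where
  "incentive_compatible N Theta R G \<longleftrightarrow>
     (\<forall>i\<in>N. \<forall>t\<in>Theta i. \<forall>st si s.
        valid_strat G i st \<longrightarrow> unconditional Theta G i t st \<longrightarrow> valid_strat G i si \<longrightarrow>
        (\<forall>j\<in>N. valid_strat G j (s j)) \<longrightarrow>
        R t (outc G (zpath G (s(i := st)))) (outc G (zpath G (s(i := si)))))"

definition info_prec :: "('i,'t) infoset \<Rightarrow> ('i,'t) infoset \<Rightarrow> bool" where
  "info_prec I J \<longleftrightarrow> (\<exists>h\<in>I. \<exists>h'\<in>J. strict_prefix h h')"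

definition immediate_succ :: "('i,'t,'x) gform \<Rightarrow> 'i \<Rightarrow> ('i,'t) infoset \<Rightarrow> ('i,'t) infoset \<Rightarrow> bool" where
  "immediate_succ G i I J \<longleftrightarrow> info_prec I J \<and>
     \<not> (\<exists>K\<in>infos G i. info_prec I K \<and> info_prec K J)"

definition reaction_proof ::
  "'i set \<Rightarrow> ('i \<Rightarrow> 't set) \<Rightarrow> ('t \<Rightarrow> 'x \<Rightarrow> 'x \<Rightarrow> bool) \<Rightarrow> (('i \<Rightarrow> 't) \<Rightarrow> 'x) \<Rightarrow> ('i,'t,'x) gform \<Rightarrow> bool" where
  "reaction_proof N Theta R f G \<longleftrightarrow>
     (\<forall>i\<in>N. \<forall>j\<in>N. i \<noteq> j \<longrightarrow>
       (\<forall>I\<in>infos G i. \<forall>I1\<in>infos G i. \<forall>I2\<in>infos G i.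
          I1 \<noteq> I2 \<longrightarrow> immediate_succ G i I I1 \<longrightarrow> immediate_succ G i I I2 \<longrightarrow>
          thetaI Theta i I1 = thetaI Theta i I2 \<longrightarrow>
          (\<forall>h1\<in>I1. \<forall>h2\<in>I2. \<forall>s.
             (\<forall>k\<in>N - {i, j}. valid_strat G k (s k)) \<longrightarrow>
             consistent N G (N - {i, j}) s h1 \<longrightarrow> consistent N G (N - {i, j}) s h2 \<longrightarrow>
             (\<forall>th1\<in>profilesH N Theta h1. \<forall>th2\<in>profilesH N Theta h2.
                consistent_type N Theta G (N - {i, j}) s th1 \<longrightarrow>
                consistent_type N Theta G (N - {i, j}) s th2 \<longrightarrow>
                R (th1 j) (f th1) (f th2)))))"

end

theory Submission
  imports Defs
begin


lemma exp_snoc: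
  "experience G i (h @ [a]) = experience G i h @
     (if i \<in> movers G h then [(infoset_of G i h, the (a i))] else [])"
proof -
  have c: "map (\<lambda>k. (infoset_of G i (take k (h @ [a])), the (((h @ [a]) ! k) i)))
      (filter (\<lambda>k. i \<in> movers G (take k (h @ [a]))) [0..<length h])
    = map (\<lambda>k. (infoset_of G i (take k h), the ((h ! k) i)))
      (filter (\<lambda>k. i \<in> movers G (take k h)) [0..<length h])"
    by (rule map_cong) (auto simp: nth_append intro!: filter_cong)
  show ?thesis unfolding experience_def using c by simp
qed

lemma exp_take_prefix: "prefix (experience G i (take n h)) (experience G i h)"
proof (induction h arbitrary: n rule: rev_induct)
  case Nil then show ?case by simp
next
  case (snoc a h)
  show ?case
  proof (cases "n \<le> length h")
    case True
    then have "take n (h @ [a]) = take n h" by simp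
    then show ?thesis using snoc[of n] by (simp add: exp_snoc prefix_append)
  next
    case False
    then show ?thesis by simp
  qed
qed

lemma exp_key:
  assumes "n < length q" "i \<in> movers G (take n q)"
  shows "length (experience G i (take n q)) < length (experience G i q) \<and>
    experience G i q ! length (experience G i (take n q)) = (infoset_of G i (take n q), the ((q!n) i))"
proof -
  have t: "take (Suc n) q = take n q @ [q!n]" using assms(1) by (simp add: take_Suc_conv_app_nth)
  have "prefix (experience G i (take (Suc n) q)) (experience G i q)" by (rule exp_take_prefix)
  then have p: "prefix (experience G i (take n q) @ [(infoset_of G i (take n q), the ((q!n) i))]) (experience G i q)"
    using t assms(2) by (simp add: exp_snoc)
  then show ?thesis
    by (metis (no_types, lifting) append_eq_conv_conj length_append_singleton less_eq_Suc_le nth_append_length nth_take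
        prefix_def prefix_length_le lessI)
qed

lemma exp_entry:
  "l < length (experience G i h) \<Longrightarrow> \<exists>k<length h. i \<in> movers G (take k h) \<and>
     length (experience G i (take k h)) = l \<and>
     experience G i h ! l = (infoset_of G i (take k h), the ((h!k) i))"
proof (induction h arbitrary: l rule: rev_induct)
  case Nil then show ?case by (simp add: experience_def)
next
  case (snoc a h)
  show ?case
  proof (cases "l < length (experience G i h)")
    case True
    from snoc.IH[OF True] obtain k where k: "k<length h" "i \<in> movers G (take k h)"
      "length (experience G i (take k h)) = l"
      "experience G i h ! l = (infoset_of G i (take k h), the ((h!k) i))" by blast
    show ?thesis
      by (rule exI[of _ k]) (use k True in \<open>auto simp: exp_snoc nth_append\<close>)
  next
    case False
    then have m: "i \<in> movers G h" "l = length (experience G i h)"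
      using snoc.prems by (auto simp: exp_snoc split: if_splits)
    show ?thesis
      by (rule exI[of _ "length h"]) (use m in \<open>auto simp: exp_snoc nth_append\<close>)
  qed
qed



lemma gf_D:
  assumes "game_form N G"
  shows gf_fin: "finite (hists G)" and gf_nil: "[] \<in> hists G"
   and gf_pc: "\<forall>h\<in>hists G. \<forall>g. prefix g h \<longrightarrow> g \<in> hists G"
   and gf_root: "[] \<in> nonterm G" and gf_mroot: "movers G [] = N"
   and gf_nt: "\<forall>h\<in>nonterm G. movers G h \<noteq> {} \<and> movers G h \<subseteq> N \<and>
        (\<forall>i\<in>movers G h. acts G i h \<noteq> {}) \<and>
        (\<forall>a. h @ [a] \<in> hists G \<longleftrightarrow>
            (\<forall>i. (i \<in> movers G h \<longrightarrow> (\<exists>x. a i = Some x \<and> x \<in> acts G i h)) \<and>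
                 (i \<notin> movers G h \<longrightarrow> a i = None)))"
   and gf_parts: "\<forall>i\<in>N. partition_on (decnodes G i) (infos G i)"
   and gf_noinf: "\<forall>i. i \<notin> N \<longrightarrow> infos G i = {}"
   and gf_actseq: "\<forall>i\<in>N. \<forall>I\<in>infos G i. \<forall>h\<in>I. \<forall>h'\<in>I. acts G i h = acts G i h'"
   and gf_expeq: "\<forall>i\<in>N. \<forall>I\<in>infos G i. \<forall>h\<in>I. \<forall>h'\<in>I. experience G i h = experience G i h'"
  using assms unfolding game_form_def apply (simp_all only:) by (elim conjE; assumption)+

lemma gf_prefix: "game_form N G \<Longrightarrow> h \<in> hists G \<Longrightarrow> prefix g h \<Longrightarrow> g \<in> hists G"
  using gf_pc by blast

lemma gf_nonterm_take:
  assumes "game_form N G" "h \<in> hists G" "k < length h"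
  shows "take k h \<in> nonterm G"
proof -
  have "take k h \<in> hists G" using gf_prefix[OF assms(1,2)] by (simp add: take_is_prefix)
  moreover have "take k h \<noteq> h"
  proof
    assume "take k h = h"
    then have "length (take k h) = length h" by simp
    with assms(3) show False by simp
  qed
  then have "strict_prefix (take k h) h" using take_is_prefix[of k h] by (simp add: strict_prefix_def)
  ultimately show ?thesis using assms(2) unfolding nonterm_def terminal_def by blast
qed

lemma gf_step:
  assumes "game_form N G" "g \<in> nonterm G"
  shows "g @ [a] \<in> hists G \<longleftrightarrow>
            (\<forall>i. (i \<in> movers G g \<longrightarrow> (\<exists>x. a i = Some x \<and> x \<in> acts G i g)) \<and>
                 (i \<notin> movers G g \<longrightarrow> a i = None))"
  using bspec[OF gf_nt[OF assms(1)] assms(2)] by (elim conjE) (drule spec[of _ a], assumption)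

lemma gf_movers:
  assumes "game_form N G" "g \<in> nonterm G"
  shows "movers G g \<subseteq> N \<and> movers G g \<noteq> {}"
proof -
  note c = bspec[OF gf_nt[OF assms(1)] assms(2)]
  show ?thesis using conjunct1[OF c] conjunct1[OF conjunct2[OF c]] by (intro conjI)
qed

lemma gf_actsne:
  assumes "game_form N G" "g \<in> nonterm G" "i \<in> movers G g"
  shows "acts G i g \<noteq> {}"
proof -
  note c = bspec[OF gf_nt[OF assms(1)] assms(2)]
  show ?thesis using bspec[OF conjunct1[OF conjunct2[OF conjunct2[OF c]]] assms(3)] .
qed

lemma gf_act:
  assumes "game_form N G" "h \<in> hists G" "k < length h"
  shows "(i \<in> movers G (take k h) \<longrightarrow> (\<exists>x. (h!k) i = Some x \<and> x \<in> acts G i (take k h))) \<and>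
         (i \<notin> movers G (take k h) \<longrightarrow> (h!k) i = None)"
proof -
  have "take k h @ [h!k] \<in> hists G"
  proof -
    have "take (Suc k) h = take k h @ [h!k]" using assms(3) by (simp add: take_Suc_conv_app_nth)
    moreover have "take (Suc k) h \<in> hists G" using gf_prefix[OF assms(1,2)] take_is_prefix by blast
    ultimately show ?thesis by simp
  qed
  then show ?thesis using gf_step[OF assms(1) gf_nonterm_take[OF assms]] by blast
qed

lemma nonterm_hists: "g \<in> nonterm G \<Longrightarrow> g \<in> hists G"
  unfolding nonterm_def by blast

lemma decnode_take:
  "game_form N G \<Longrightarrow> h \<in> hists G \<Longrightarrow> k < length h \<Longrightarrow> i \<in> movers G (take k h) \<Longrightarrow>
   take k h \<in> decnodes G i"
  using gf_nonterm_take[of N G h k] by (simp add: decnodes_def)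

lemma decnodes_N:
  assumes "game_form N G" "h \<in> decnodes G i" shows "i \<in> N"
proof -
  have "h \<in> nonterm G" "i \<in> movers G h" using assms(2) by (simp_all add: decnodes_def)
  then show ?thesis using conjunct1[OF gf_movers[OF assms(1)]] by (rule_tac subsetD) 
qed

lemma decnodes_hists: "h \<in> decnodes G i \<Longrightarrow> h \<in> hists G"
  unfolding decnodes_def nonterm_def by simp

lemma gf_part: "game_form N G \<Longrightarrow> i \<in> N \<Longrightarrow> partition_on (decnodes G i) (infos G i)"
  using gf_parts by blast

lemma infos_N: "game_form N G \<Longrightarrow> I \<in> infos G i \<Longrightarrow> i \<in> N"
  using gf_noinf by blast

lemma infos_dec: "h \<in> decnodes G i" if "game_form N G" "I \<in> infos G i" "h \<in> I"
proof -
  have "decnodes G i = \<Union>(infos G i)" using partition_onD1[OF gf_part[OF that(1) infos_N[OF that(1,2)]]] .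
  moreover have "h \<in> \<Union>(infos G i)" using that(2,3) by (rule UnionI)
  ultimately show ?thesis by simp
qed

lemma infoset_of_eq:
  assumes "game_form N G" "I \<in> infos G i" "h \<in> I"
  shows "infoset_of G i h = I"
proof -
  have p: "partition_on (decnodes G i) (infos G i)" using gf_part[OF assms(1) infos_N[OF assms(1,2)]] .
  show ?thesis unfolding infoset_of_def
  proof (rule the_equality)
    show "I \<in> infos G i \<and> h \<in> I" using assms(2,3) by (rule conjI)
    fix J assume jj: "J \<in> infos G i \<and> h \<in> J"
    show "J = I"
    proof (rule ccontr)
      assume "J \<noteq> I"
      then have "J \<inter> I = {}" using disjointD[OF partition_onD2[OF p], of J I] assms(2) jj by simp
      then show False using jj assms(3) by auto
    qed
  qed
qed

lemma infoset_of_props: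
  assumes "game_form N G" "h \<in> decnodes G i"
  shows "infoset_of G i h \<in> infos G i \<and> h \<in> infoset_of G i h"
proof -
  have iN: "i \<in> N" by (rule decnodes_N[OF assms])
  have p: "decnodes G i = \<Union>(infos G i)" using partition_onD1[OF gf_part[OF assms(1) iN]] .
  have "h \<in> \<Union>(infos G i)" using assms(2) p by simp
  then obtain I where I: "I \<in> infos G i" "h \<in> I" by (rule UnionE)
  have "infoset_of G i h = I" by (rule infoset_of_eq[OF assms(1) I])
  then show ?thesis using I by simp
qed

lemma infos_exp:
  assumes "game_form N G" "I \<in> infos G i" "h \<in> I" "h' \<in> I"
  shows "experience G i h = experience G i h'"
proof -
  have iN: "i \<in> N" by (rule infos_N[OF assms(1,2)])
  show ?thesis using bspec[OF bspec[OF bspec[OF bspec[OF gf_expeq[OF assms(1)] iN] assms(2)] assms(3)] assms(4)] .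
qed

lemma infos_acts:
  assumes "game_form N G" "I \<in> infos G i" "h \<in> I" "h' \<in> I"
  shows "acts G i h = acts G i h'"
proof -
  have iN: "i \<in> N" by (rule infos_N[OF assms(1,2)])
  show ?thesis using bspec[OF bspec[OF bspec[OF bspec[OF gf_actseq[OF assms(1)] iN] assms(2)] assms(3)] assms(4)] .
qed

lemma thetaH_snoc: "thetaH Theta i (h @ [a]) = (case a i of None \<Rightarrow> thetaH Theta i h | Some x \<Rightarrow> x)"
  unfolding thetaH_def by simp

lemma thetaH_Nil: "thetaH Theta i [] = Theta i"
  by (simp add: thetaH_def)

lemma thetaH_exp:
  assumes "game_form N G" "h \<in> hists G"
  shows "thetaH Theta i h = (if experience G i h = [] then Theta i else snd (last (experience G i h)))"
  using assms(2)
proof (induction h rule: rev_induct)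
  case Nil then show ?case by (simp add: thetaH_Nil experience_def)
next
  case (snoc a h)
  have hh: "h \<in> hists G" using gf_prefix[OF assms(1) snoc.prems] by simp
  have nt: "h \<in> nonterm G" using gf_nonterm_take[OF assms(1) snoc.prems, of "length h"] by simp
  have st: "(i \<in> movers G h \<longrightarrow> (\<exists>x. a i = Some x \<and> x \<in> acts G i h)) \<and>
                 (i \<notin> movers G h \<longrightarrow> a i = None)"
    using spec[OF iffD1[OF gf_step[OF assms(1) nt, of a] snoc.prems], of i] .
  show ?case
  proof (cases "i \<in> movers G h")
    case True
    then obtain x where "a i = Some x" using st by blast
    then show ?thesis using True by (simp add: thetaH_snoc exp_snoc)
  next
    case False
    then have "a i = None" using st by blast
    then show ?thesis using False snoc.IH[OF hh] by (simp add: thetaH_snoc exp_snoc)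
  qed
qed

lemma infos_thetaH: "game_form N G \<Longrightarrow> I \<in> infos G i \<Longrightarrow> h \<in> I \<Longrightarrow> h' \<in> I \<Longrightarrow>
   thetaH Theta i h = thetaH Theta i h'"
proof -
  assume a: "game_form N G" "I \<in> infos G i" "h \<in> I" "h' \<in> I"
  have hh: "h \<in> hists G" using decnodes_hists[OF infos_dec[OF a(1,2,3)]] .
  have hh': "h' \<in> hists G" using decnodes_hists[OF infos_dec[OF a(1,2,4)]] .
  have e: "experience G i h = experience G i h'" by (rule infos_exp[OF a])
  have "thetaH Theta i h = (if experience G i h = [] then Theta i else snd (last (experience G i h)))"
    by (rule thetaH_exp[OF a(1) hh])
  also have "\<dots> = (if experience G i h' = [] then Theta i else snd (last (experience G i h')))"
    unfolding e ..
  also have "\<dots> = thetaH Theta i h'" by (rule thetaH_exp[OF a(1) hh', symmetric])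
  finally show ?thesis .
qed

lemma thetaI_eq: "game_form N G \<Longrightarrow> I \<in> infos G i \<Longrightarrow> h \<in> I \<Longrightarrow> thetaI Theta i I = thetaH Theta i h"
proof -
  assume a: "game_form N G" "I \<in> infos G i" "h \<in> I"
  have "(SOME h. h \<in> I) \<in> I" using a(3) by (rule someI)
  then show ?thesis unfolding thetaI_def by (rule infos_thetaH[OF a(1,2) _ a(3)])
qed



lemma gm_D:
  assumes "gradual_mechanism N X Theta f G"
  shows gm_gf: "game_form N G" and gm_outX: "outc G ` terminal G \<subseteq> X"
   and gm_acts: "\<forall>i\<in>N. \<forall>h\<in>decnodes G i.
        (\<forall>a\<in>acts G i h. a \<noteq> {} \<and> a \<subseteq> Theta i) \<and>
        disjoint (acts G i h) \<and> \<Union>(acts G i h) = thetaH Theta i h"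
   and gm_outc: "\<forall>z\<in>terminal G. \<forall>th\<in>profilesH N Theta z. outc G z = f th"
  using assms unfolding gradual_mechanism_def apply (simp_all only:) by (elim conjE; assumption)+

lemma gm_act:
  assumes "gradual_mechanism N X Theta f G" "h \<in> decnodes G i"
  shows "(\<forall>a\<in>acts G i h. a \<noteq> {} \<and> a \<subseteq> Theta i) \<and>
        disjoint (acts G i h) \<and> \<Union>(acts G i h) = thetaH Theta i h"
proof -
  have "i \<in> N" by (rule decnodes_N[OF gm_gf[OF assms(1)] assms(2)])
  then show ?thesis using bspec[OF bspec[OF gm_acts[OF assms(1)]] assms(2)] by simp
qed

lemma gm_outc1:
  "gradual_mechanism N X Theta f G \<Longrightarrow> z \<in> terminal G \<Longrightarrow> th \<in> profilesH N Theta z \<Longrightarrow> outc G z = f th"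
  by (drule gm_outc) (drule (1) bspec, drule (1) bspec)

lemma thetaH_take_Suc:
  assumes "n < length h" "(h!n) i = Some x"
  shows "thetaH Theta i (take (Suc n) h) = x"
proof -
  have "take (Suc n) h = take n h @ [h!n]" using assms(1) by (simp add: take_Suc_conv_app_nth)
  then show ?thesis using assms(2) by (simp add: thetaH_snoc)
qed

lemma thetaH_take_Suc_None:
  assumes "n < length h" "(h!n) i = None"
  shows "thetaH Theta i (take (Suc n) h) = thetaH Theta i (take n h)"
proof -
  have "take (Suc n) h = take n h @ [h!n]" using assms(1) by (simp add: take_Suc_conv_app_nth)
  then show ?thesis using assms(2) by (simp add: thetaH_snoc)
qed

lemma thetaH_step_sub:
  assumes gm: "gradual_mechanism N X Theta f G" and h: "h \<in> hists G"
  shows "thetaH Theta i (take (Suc n) h) \<subseteq> thetaH Theta i (take n h)"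
proof (cases "n < length h")
  case True
  have gf: "game_form N G" by (rule gm_gf[OF gm])
  note ga = gf_act[OF gf h True, of i]
  show ?thesis
  proof (cases "i \<in> movers G (take n h)")
    case mv: True
    then obtain x where x: "(h!n) i = Some x" "x \<in> acts G i (take n h)" using ga by blast
    have dn: "take n h \<in> decnodes G i" by (rule decnode_take[OF gf h True mv])
    have "\<Union>(acts G i (take n h)) = thetaH Theta i (take n h)" using gm_act[OF gm dn] by simp
    then have "x \<subseteq> thetaH Theta i (take n h)" using x(2) by blast
    then show ?thesis using thetaH_take_Suc[OF True x(1)] by simp
  next
    case False
    then have "(h!n) i = None" using ga by simp
    then show ?thesis using thetaH_take_Suc_None[OF True] by simp
  qed
next
  case False
  then show ?thesis by simp
qed

lemma thetaH_take_mono: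
  assumes gm: "gradual_mechanism N X Theta f G" and h: "h \<in> hists G" and nm: "n \<le> m"
  shows "thetaH Theta i (take m h) \<subseteq> thetaH Theta i (take n h)"
  using lift_Suc_antimono_le[of "\<lambda>n. thetaH Theta i (take n h)", OF thetaH_step_sub[OF gm h] nm] .

lemma thetaH_prefix:
  assumes gm: "gradual_mechanism N X Theta f G" and h: "h \<in> hists G" and p: "prefix g h"
  shows "thetaH Theta i h \<subseteq> thetaH Theta i g"
proof -
  obtain t where t: "h = g @ t" using p by (auto simp: prefix_def)
  have "g = take (length g) h" using t by simp
  moreover have "h = take (length h) h" by simp
  moreover have "length g \<le> length h" using t by simp
  ultimately show ?thesis using thetaH_take_mono[OF gm h, of "length g" "length h" i] by metis
qed

lemma thetaH_sub_Theta:
  assumes gm: "gradual_mechanism N X Theta f G" and h: "h \<in> hists G"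
  shows "thetaH Theta i h \<subseteq> Theta i"
  using thetaH_prefix[OF gm h, of "[]" i] by (simp add: thetaH_Nil)

lemma Theta_ne:
  assumes gm: "gradual_mechanism N X Theta f G" and iN: "i \<in> N"
  shows "Theta i \<noteq> {}"
proof -
  have gf: "game_form N G" by (rule gm_gf[OF gm])
  have r: "[] \<in> nonterm G" by (rule gf_root[OF gf])
  have mv: "i \<in> movers G []" using gf_mroot[OF gf] iN by simp
  have dn: "[] \<in> decnodes G i" using r mv by (simp add: decnodes_def)
  have "acts G i [] \<noteq> {}" by (rule gf_actsne[OF gf r mv])
  then obtain a where a: "a \<in> acts G i []" by blast
  then have "a \<noteq> {} \<and> a \<subseteq> Theta i" using gm_act[OF gm dn] by blast
  then show ?thesis by blast
qed

lemma thetaH_ne: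
  assumes gm: "gradual_mechanism N X Theta f G" and iN: "i \<in> N" and h: "h \<in> hists G"
  shows "thetaH Theta i h \<noteq> {}"
proof -
  have gf: "game_form N G" by (rule gm_gf[OF gm])
  show ?thesis
  proof (cases "experience G i h = []")
    case True
    then show ?thesis using thetaH_exp[OF gf h, of Theta i] Theta_ne[OF gm iN] by simp
  next
    case False
    define l where "l = length (experience G i h) - 1"
    have l: "l < length (experience G i h)" using False unfolding l_def by simp
    have last: "last (experience G i h) = experience G i h ! l"
      using False unfolding l_def by (simp add: last_conv_nth)
    obtain k where k: "k<length h" "i \<in> movers G (take k h)"
      "experience G i h ! l = (infoset_of G i (take k h), the ((h!k) i))"
      using exp_entry[OF l] by blast
    obtain x where x: "(h!k) i = Some x" "x \<in> acts G i (take k h)" using gf_act[OF gf h k(1), of i] k(2) by blast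
    have dn: "take k h \<in> decnodes G i" by (rule decnode_take[OF gf h k(1,2)])
    have "x \<noteq> {}" using gm_act[OF gm dn] x(2) by blast
    then show ?thesis using thetaH_exp[OF gf h, of Theta i] False last k(3) x(1) by simp
  qed
qed

lemma profilesH_mem: "th \<in> profilesH N Theta h \<Longrightarrow> i \<in> N \<Longrightarrow> th i \<in> thetaH Theta i h"
  unfolding profilesH_def by (rule PiE_mem)

lemma prof_agree:
  assumes gm: "gradual_mechanism N X Theta f G" and h: "h \<in> hists G" and h': "h' \<in> hists G"
    and th: "th \<in> profilesH N Theta h" and th': "th \<in> profilesH N Theta h'"
  shows "n \<le> length h \<Longrightarrow> n \<le> length h' \<Longrightarrow> take n h = take n h'"
proof (induction n)
  case 0 then show ?case by simp
next
  case (Suc n)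
  have gf: "game_form N G" by (rule gm_gf[OF gm])
  have n: "n < length h" "n < length h'" using Suc.prems by auto
  have IH: "take n h = take n h'" using Suc.IH n by simp
  have "h!n = h'!n"
  proof
    fix b
    note ga = gf_act[OF gf h n(1), of b]
    note ga' = gf_act[OF gf h' n(2), of b]
    show "(h!n) b = (h'!n) b"
    proof (cases "b \<in> movers G (take n h)")
      case mv: True
      then have mv': "b \<in> movers G (take n h')" using IH by simp
      obtain x where x: "(h!n) b = Some x" "x \<in> acts G b (take n h)" using ga mv by blast
      obtain x' where x': "(h'!n) b = Some x'" "x' \<in> acts G b (take n h)" using ga' mv' IH by auto
      have dn: "take n h \<in> decnodes G b" by (rule decnode_take[OF gf h n(1) mv])
      have bN: "b \<in> N" by (rule decnodes_N[OF gf dn])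
      have "th b \<in> thetaH Theta b h" by (rule profilesH_mem[OF th bN])
      then have t1: "th b \<in> x" using thetaH_take_mono[OF gm h, of "Suc n" "length h" b]
        thetaH_take_Suc[OF n(1) x(1)] n(1) by auto
      have "th b \<in> thetaH Theta b h'" by (rule profilesH_mem[OF th' bN])
      then have t2: "th b \<in> x'" using thetaH_take_mono[OF gm h', of "Suc n" "length h'" b]
        thetaH_take_Suc[OF n(2) x'(1)] n(2) by auto
      have dj: "disjoint (acts G b (take n h))" using gm_act[OF gm dn] by simp
      have "x = x'"
      proof (rule ccontr)
        assume "x \<noteq> x'"
        then have "x \<inter> x' = {}" using disjointD[OF dj x(2) x'(2)] by simp
        then show False using t1 t2 by blast
      qed
      then show ?thesis using x x' by simp
    next
      case nmv: False
      then have nmv': "b \<notin> movers G (take n h')" using IH by simp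
      show ?thesis using ga ga' nmv nmv' by simp
    qed
  qed
  then show ?case using IH n by (simp add: take_Suc_conv_app_nth)
qed



lemma terminal_hists: "z \<in> terminal G \<Longrightarrow> z \<in> hists G"
  unfolding terminal_def by simp

lemma terminal_prefix_eq:
  assumes "z \<in> terminal G" "h \<in> hists G" "prefix z h"
  shows "h = z"
proof (rule ccontr)
  assume "h \<noteq> z"
  then have "strict_prefix z h" using assms(3) by (simp add: strict_prefix_def)
  then show False using assms(1,2) unfolding terminal_def by blast
qed

lemma take_eq_prefix: "take (length g) h = g \<Longrightarrow> prefix g h"
  by (metis take_is_prefix)

lemma agree_prefix_or:
  assumes "\<And>n. n \<le> length h \<Longrightarrow> n \<le> length h' \<Longrightarrow> take n h = take n h'"
  shows "prefix h h' \<or> prefix h' h"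
proof (cases "length h \<le> length h'")
  case True
  then have "take (length h) h' = h" using assms[of "length h"] by simp
  then show ?thesis by (simp add: take_eq_prefix)
next
  case False
  then have "take (length h') h = h'" using assms[of "length h'"] by simp
  then show ?thesis by (simp add: take_eq_prefix)
qed

lemma prefix_terminal:
  assumes "h \<in> hists G" "z \<in> terminal G" "prefix h z \<or> prefix z h"
  shows "prefix h z"
proof (cases "prefix h z")
  case False
  then have "prefix z h" using assms(3) by simp
  then have "h = z" using terminal_prefix_eq[OF assms(2,1)] by simp
  then show ?thesis by simp
qed simp

lemma prof_prefix:
  assumes gm: "gradual_mechanism N X Theta f G" and h: "h \<in> hists G" and z: "z \<in> terminal G"
    and th: "th \<in> profilesH N Theta h" and th': "th \<in> profilesH N Theta z"
  shows "prefix h z"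
proof -
  have "prefix h z \<or> prefix z h"
    by (rule agree_prefix_or) (rule prof_agree[OF gm h terminal_hists[OF z] th th'])
  then show ?thesis by (rule prefix_terminal[OF h z])
qed

lemma prof_unique:
  assumes gm: "gradual_mechanism N X Theta f G" and z: "z \<in> terminal G" and z': "z' \<in> terminal G"
    and th: "th \<in> profilesH N Theta z" and th': "th \<in> profilesH N Theta z'"
  shows "z = z'"
proof -
  have "prefix z z'" by (rule prof_prefix[OF gm terminal_hists[OF z] z' th th'])
  then show ?thesis using terminal_prefix_eq[OF z terminal_hists[OF z']] by simp
qed

lemma hists_bound:
  assumes gf: "game_form N G" and g: "g \<in> hists G"
  shows "length g < Suc (Max (length ` hists G))"
proof -
  have "finite (length ` hists G)" using gf_fin[OF gf] by simp
  then have "length g \<le> Max (length ` hists G)" using g by simp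
  then show ?thesis by simp
qed

lemma maximal_hist:
  assumes gf: "game_form N G" and p: "P g0" and ph: "\<And>g. P g \<Longrightarrow> g \<in> hists G"
  shows "\<exists>g. P g \<and> (\<forall>g'. P g' \<longrightarrow> length g' \<le> length g)"
proof -
  have "\<forall>y. P y \<longrightarrow> length y < Suc (Max (length ` hists G))"
    using hists_bound[OF gf] ph by blast
  then show ?thesis using ex_has_greatest_nat[of P g0 length] p by blast
qed

lemma nonterm_of: "g \<in> hists G \<Longrightarrow> g \<notin> terminal G \<Longrightarrow> g \<in> nonterm G"
  unfolding nonterm_def by simp

lemma prof_exists:
  assumes gm: "gradual_mechanism N X Theta f G" and h: "h \<in> hists G" and th: "th \<in> profilesH N Theta h"
  shows "\<exists>z\<in>terminal G. prefix h z \<and> th \<in> profilesH N Theta z"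
proof -
  have gf: "game_form N G" by (rule gm_gf[OF gm])
  define P where "P g \<longleftrightarrow> g \<in> hists G \<and> prefix h g \<and> th \<in> profilesH N Theta g" for g
  have "P h" using h th unfolding P_def by simp
  then obtain g where g: "P g" and mx: "\<And>g'. P g' \<Longrightarrow> length g' \<le> length g"
    using maximal_hist[OF gf, of P h] unfolding P_def by blast
  have gh: "g \<in> hists G" "prefix h g" "th \<in> profilesH N Theta g" using g unfolding P_def by auto
  have "g \<in> terminal G"
  proof (rule ccontr)
    assume "g \<notin> terminal G"
    then have nt: "g \<in> nonterm G" using nonterm_of gh(1) by blast
    define a where "a = (\<lambda>b. if b \<in> movers G g then Some (SOME x. x \<in> acts G b g \<and> th b \<in> x) else None)"
    have ex: "\<exists>x. x \<in> acts G b g \<and> th b \<in> x" if mv: "b \<in> movers G g" for b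
    proof -
      have dn: "g \<in> decnodes G b" using nt mv by (simp add: decnodes_def)
      have bN: "b \<in> N" by (rule decnodes_N[OF gf dn])
      have "th b \<in> thetaH Theta b g" by (rule profilesH_mem[OF gh(3) bN])
      then have "th b \<in> \<Union>(acts G b g)" using gm_act[OF gm dn] by simp
      then show ?thesis by blast
    qed
    have sm: "(SOME x. x \<in> acts G b g \<and> th b \<in> x) \<in> acts G b g \<and> th b \<in> (SOME x. x \<in> acts G b g \<and> th b \<in> x)"
      if "b \<in> movers G g" for b
      using someI_ex[OF ex[OF that]] .
    have "\<forall>b. (b \<in> movers G g \<longrightarrow> (\<exists>x. a b = Some x \<and> x \<in> acts G b g)) \<and>
                 (b \<notin> movers G g \<longrightarrow> a b = None)"
      using sm unfolding a_def by auto
    then have ga: "g @ [a] \<in> hists G" using gf_step[OF gf nt, of a] by simp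
    have "th \<in> profilesH N Theta (g @ [a])"
      unfolding profilesH_def PiE_iff
    proof (intro conjI ballI)
      fix b assume bN: "b \<in> N"
      have t0: "th b \<in> thetaH Theta b g" by (rule profilesH_mem[OF gh(3) bN])
      show "th b \<in> thetaH Theta b (g @ [a])"
      proof (cases "b \<in> movers G g")
        case True
        then show ?thesis using sm[OF True] unfolding thetaH_snoc a_def by simp
      next
        case False
        then show ?thesis using t0 unfolding thetaH_snoc a_def by simp
      qed
    next
      show "th \<in> extensional N" using gh(3) unfolding profilesH_def PiE_iff by simp
    qed
    then have "P (g @ [a])" using ga gh(2) unfolding P_def by (simp add: prefix_append)
    then have "length (g @ [a]) \<le> length g" by (rule mx)
    then show False by simp
  qed
  then show ?thesis using gh by blast
qed

lemma followsD: "follows G s h \<Longrightarrow> k < length h \<Longrightarrow> h ! k =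
      (\<lambda>j. if j \<in> movers G (take k h) then Some (s j (infoset_of G j (take k h))) else None)"
  unfolding follows_def by blast

lemma valid_act:
  assumes gf: "game_form N G" and v: "valid_strat G b sb" and dn: "h \<in> decnodes G b"
  shows "sb (infoset_of G b h) \<in> acts G b h"
proof -
  have I: "infoset_of G b h \<in> infos G b" "h \<in> infoset_of G b h" using infoset_of_props[OF gf dn] by auto
  have "sb (infoset_of G b h) \<in> acts G b (SOME h'. h' \<in> infoset_of G b h)"
    using v I(1) unfolding valid_strat_def by blast
  moreover have "(SOME h'. h' \<in> infoset_of G b h) \<in> infoset_of G b h" using I(2) by (rule someI)
  ultimately show ?thesis using infos_acts[OF gf I(1) _ I(2)] by metis
qed

lemma follows_exists:
  assumes gf: "game_form N G" and v: "\<forall>b\<in>N. valid_strat G b (s b)"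
  shows "\<exists>z\<in>terminal G. follows G s z"
proof -
  define P where "P g \<longleftrightarrow> g \<in> hists G \<and> follows G s g" for g
  have "P []" using gf_nil[OF gf] unfolding P_def follows_def by simp
  then obtain g where g: "P g" and mx: "\<And>g'. P g' \<Longrightarrow> length g' \<le> length g"
    using maximal_hist[OF gf, of P "[]"] unfolding P_def by blast
  have gh: "g \<in> hists G" "follows G s g" using g unfolding P_def by auto
  have "g \<in> terminal G"
  proof (rule ccontr)
    assume "g \<notin> terminal G"
    then have nt: "g \<in> nonterm G" using nonterm_of gh(1) by blast
    define a where "a = (\<lambda>j. if j \<in> movers G g then Some (s j (infoset_of G j g)) else None)"
    have "s b (infoset_of G b g) \<in> acts G b g" if mv: "b \<in> movers G g" for b
    proof -
      have dn: "g \<in> decnodes G b" using nt mv by (simp add: decnodes_def)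
      have bN: "b \<in> N" by (rule decnodes_N[OF gf dn])
      show ?thesis by (rule valid_act[OF gf bspec[OF v bN] dn])
    qed
    then have "\<forall>b. (b \<in> movers G g \<longrightarrow> (\<exists>x. a b = Some x \<and> x \<in> acts G b g)) \<and>
                 (b \<notin> movers G g \<longrightarrow> a b = None)"
      unfolding a_def by auto
    then have ga: "g @ [a] \<in> hists G" using gf_step[OF gf nt, of a] by simp
    have "follows G s (g @ [a])"
      unfolding follows_def
    proof (intro allI impI)
      fix k assume k: "k < length (g @ [a])"
      show "(g @ [a]) ! k =
        (\<lambda>j. if j \<in> movers G (take k (g @ [a])) then Some (s j (infoset_of G j (take k (g @ [a])))) else None)"
      proof (cases "k < length g")
        case True
        have tk: "take k (g @ [a]) = take k g" using True by simp
        show ?thesis using followsD[OF gh(2) True] True unfolding tk by (simp add: nth_append)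
      next
        case False
        then have kk: "k = length g" using k by simp
        then have tk: "take k (g @ [a]) = g" by simp
        have "(g @ [a]) ! k = a" using kk by simp
        then show ?thesis unfolding tk by (simp add: a_def)
      qed
    qed
    then have "P (g @ [a])" using ga unfolding P_def by simp
    then have "length (g @ [a]) \<le> length g" by (rule mx)
    then show False by simp
  qed
  then show ?thesis using gh by blast
qed

lemma follows_agree:
  assumes "follows G s z" "follows G s z'"
  shows "n \<le> length z \<Longrightarrow> n \<le> length z' \<Longrightarrow> take n z = take n z'"
proof (induction n)
  case 0 then show ?case by simp
next
  case (Suc n)
  have n: "n < length z" "n < length z'" using Suc.prems by auto
  have IH: "take n z = take n z'" using Suc.IH n by simp
  have "z!n = z'!n" using followsD[OF assms(1) n(1)] followsD[OF assms(2) n(2)] unfolding IH by simp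
  then show ?case using IH n by (simp add: take_Suc_conv_app_nth)
qed

lemma follows_unique:
  assumes "z \<in> terminal G" "z' \<in> terminal G" "follows G s z" "follows G s z'"
  shows "z = z'"
proof -
  have "prefix z z' \<or> prefix z' z"
    by (rule agree_prefix_or) (rule follows_agree[OF assms(3,4)])
  then have "prefix z z'" by (rule prefix_terminal[OF terminal_hists[OF assms(1)] assms(2)])
  then show ?thesis using terminal_prefix_eq[OF assms(1) terminal_hists[OF assms(2)]] by simp
qed

lemma zpath_eq:
  assumes "z \<in> terminal G" "follows G s z"
  shows "zpath G s = z"
  unfolding zpath_def
proof (rule the_equality)
  show "z \<in> terminal G \<and> follows G s z" using assms by simp
  fix z' assume "z' \<in> terminal G \<and> follows G s z'"
  then show "z' = z" using follows_unique assms by blast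
qed

lemma zpath_props:
  assumes gf: "game_form N G" and v: "\<forall>b\<in>N. valid_strat G b (s b)"
  shows "zpath G s \<in> terminal G \<and> follows G s (zpath G s)"
proof -
  obtain z where "z \<in> terminal G" "follows G s z" using follows_exists[OF gf v] by blast
  then show ?thesis using zpath_eq by metis
qed



lemma sp_take: "n < length h \<Longrightarrow> strict_prefix (take n h) h"
proof -
  assume n: "n < length h"
  have "take n h \<noteq> h"
  proof
    assume "take n h = h"
    then have "length (take n h) = length h" by simp
    with n show False by simp
  qed
  then show ?thesis using take_is_prefix[of n h] by (simp add: strict_prefix_def)
qed

lemma sp_D: "strict_prefix g h \<Longrightarrow> g = take (length g) h \<and> length g < length h"
  by (metis append_eq_conv_conj prefix_def prefix_order.less_le_not_le prefix_length_le take_all_iff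
      strict_prefix_def le_neq_implies_less)

lemma prefix_take: "prefix xs ys \<Longrightarrow> xs = take (length xs) ys"
  by (auto simp: prefix_def)

lemma exp_len_strict:
  assumes "p \<in> decnodes G b" "strict_prefix p q"
  shows "length (experience G b p) < length (experience G b q)"
proof -
  have pq: "p = take (length p) q" "length p < length q" using sp_D[OF assms(2)] by auto
  have "b \<in> movers G (take (length p) q)" using assms(1) pq(1) by (simp add: decnodes_def)
  then show ?thesis using exp_key[OF pq(2)] pq(1) by metis
qed

lemma take_take_le: "k \<le> n \<Longrightarrow> take k (take n h) = take k h"
  by (simp add: min_def)

lemma imm_from_path:
  assumes gf: "game_form N G" and z: "z \<in> hists G"
    and l: "0 < l" "l < length (experience G b z)"
  defines "E \<equiv> experience G b z"
  shows "fst (E!(l-1)) \<in> infos G b \<and> fst (E!l) \<in> infos G b \<and>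
     immediate_succ G b (fst (E!(l-1))) (fst (E!l)) \<and>
     (\<exists>h\<in>fst (E!l). prefix h z) \<and> thetaI Theta b (fst (E!l)) = snd (E!(l-1))"
proof -
  have l1: "l - 1 < length E" using l unfolding E_def by simp
  obtain k0 where k0: "k0<length z" "b \<in> movers G (take k0 z)"
      "length (experience G b (take k0 z)) = l - 1"
      "E ! (l-1) = (infoset_of G b (take k0 z), the ((z!k0) b))"
    using exp_entry[OF l1[unfolded E_def]] unfolding E_def by blast
  obtain k1 where k1: "k1<length z" "b \<in> movers G (take k1 z)"
      "length (experience G b (take k1 z)) = l"
      "E ! l = (infoset_of G b (take k1 z), the ((z!k1) b))"
    using exp_entry[OF l(2)] unfolding E_def by blast
  define g where "g = take k0 z"
  define h where "h = take k1 z"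
  have dg: "g \<in> decnodes G b" unfolding g_def by (rule decnode_take[OF gf z k0(1,2)])
  have dh: "h \<in> decnodes G b" unfolding h_def by (rule decnode_take[OF gf z k1(1,2)])
  define I where "I = infoset_of G b g"
  define J where "J = infoset_of G b h"
  have II: "I \<in> infos G b" "g \<in> I" using infoset_of_props[OF gf dg] unfolding I_def by auto
  have JJ: "J \<in> infos G b" "h \<in> J" using infoset_of_props[OF gf dh] unfolding J_def by auto
  have k01: "k0 < k1"
  proof (rule ccontr)
    assume "\<not> k0 < k1"
    then have "take k1 (take k0 z) = take k1 z" by (simp add: min_def)
    then have "prefix (experience G b h) (experience G b g)"
      unfolding g_def h_def by (metis exp_take_prefix)
    then have "l \<le> l - 1" using k0(3) k1(3) unfolding g_def h_def by (metis prefix_length_le)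
    then show False using l(1) by simp
  qed
  have gh: "strict_prefix g h"
  proof -
    have "g = take k0 h" unfolding g_def h_def using k01 by (simp add: min_def)
    moreover have "k0 < length h" unfolding h_def using k01 k1(1) by simp
    ultimately show ?thesis using sp_take by metis
  qed
  have hz: "prefix h z" unfolding h_def by (rule take_is_prefix)
  have eg: "\<And>p. p \<in> I \<Longrightarrow> experience G b p = experience G b g" using infos_exp[OF gf II(1)] II(2) by blast
  have eh: "\<And>p. p \<in> J \<Longrightarrow> experience G b p = experience G b h" using infos_exp[OF gf JJ(1)] JJ(2) by blast
  have imm: "immediate_succ G b I J"
    unfolding immediate_succ_def
  proof (intro conjI notI)
    show "info_prec I J" unfolding info_prec_def using II(2) JJ(2) gh by blast
  next
    assume "\<exists>K\<in>infos G b. info_prec I K \<and> info_prec K J"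
    then obtain K p q q' r where K: "K \<in> infos G b" "p \<in> I" "q \<in> K" "strict_prefix p q"
       "q' \<in> K" "r \<in> J" "strict_prefix q' r" unfolding info_prec_def by blast
    have "length (experience G b p) < length (experience G b q)"
      by (rule exp_len_strict[OF infos_dec[OF gf II(1) K(2)] K(4)])
    then have a1: "l - 1 < length (experience G b q)" using eg[OF K(2)] k0(3) unfolding g_def by simp
    have "length (experience G b q') < length (experience G b r)"
      by (rule exp_len_strict[OF infos_dec[OF gf K(1) K(5)] K(7)])
    then have a2: "length (experience G b q') < l" using eh[OF K(6)] k1(3) unfolding h_def by simp
    have "experience G b q = experience G b q'" by (rule infos_exp[OF gf K(1,3,5)])
    then show False using a1 a2 l(1) by simp
  qed
  have eh2: "experience G b h = take l E"
    using prefix_take[OF exp_take_prefix[of G b k1 z]] k1(3) unfolding h_def E_def by simp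
  have hne: "experience G b h \<noteq> []" using k1(3) l(1) unfolding h_def by auto
  have "thetaI Theta b J = thetaH Theta b h" by (rule thetaI_eq[OF gf JJ])
  also have "\<dots> = snd (last (experience G b h))"
    using thetaH_exp[OF gf decnodes_hists[OF dh], of Theta b] hne by simp
  also have "\<dots> = snd (E ! (l-1))" unfolding eh2 using l hne eh2
    by (simp add: last_conv_nth E_def)
  finally have th: "thetaI Theta b J = snd (E ! (l-1))" .
  have fI: "fst (E!(l-1)) = I" using k0(4) unfolding I_def g_def by simp
  have fJ: "fst (E!l) = J" using k1(4) unfolding J_def h_def by simp
  show ?thesis unfolding fI fJ using II JJ imm hz th by blast
qed

lemma follows_entry:
  assumes "follows G s h" "l < length (experience G b h)"
  shows "snd (experience G b h ! l) = s b (fst (experience G b h ! l))"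
proof -
  obtain k where k: "k<length h" "b \<in> movers G (take k h)"
      "experience G b h ! l = (infoset_of G b (take k h), the ((h!k) b))"
    using exp_entry[OF assms(2)] by blast
  show ?thesis using followsD[OF assms(1) k(1)] k(2,3) by simp
qed

lemma first_entry:
  assumes gf: "game_form N G" and z: "z \<in> terminal G" and bN: "b \<in> N"
  shows "0 < length (experience G b z) \<and> fst (experience G b z ! 0) = infoset_of G b []"
proof -
  have "z \<noteq> []" using z gf_root[OF gf] unfolding nonterm_def by auto
  then have z0: "0 < length z" by simp
  have mv: "b \<in> movers G (take 0 z)" using gf_mroot[OF gf] bN by simp
  have e0: "length (experience G b (take 0 z)) = 0" by (simp add: experience_def)
  have "length (experience G b (take 0 z)) < length (experience G b z) \<and>
    experience G b z ! length (experience G b (take 0 z)) = (infoset_of G b (take 0 z), the ((z!0) b))"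
    by (rule exp_key[OF z0 mv])
  then show ?thesis unfolding e0 by simp
qed

lemma uncond_path:
  assumes gm: "gradual_mechanism N X Theta f G" and z: "z \<in> hists G" and fl: "follows G P z"
    and u: "unconditional Theta G a t (P a)" and t: "t \<in> Theta a"
  shows "t \<in> thetaH Theta a z"
proof -
  have gf: "game_form N G" by (rule gm_gf[OF gm])
  have "t \<in> thetaH Theta a (take n z)" for n
  proof (induction n)
    case 0 then show ?case using t by (simp add: thetaH_Nil)
  next
    case (Suc n)
    show ?case
    proof (cases "n < length z")
      case True
      note zn = followsD[OF fl True]
      show ?thesis
      proof (cases "a \<in> movers G (take n z)")
        case mv: True
        have dn: "take n z \<in> decnodes G a" by (rule decnode_take[OF gf z True mv])
        have "(z!n) a = Some (P a (infoset_of G a (take n z)))" using zn mv by simp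
        then have "thetaH Theta a (take (Suc n) z) = P a (infoset_of G a (take n z))"
          by (rule thetaH_take_Suc[OF True])
        moreover have "t \<in> P a (infoset_of G a (take n z))"
          using u dn Suc.IH unfolding unconditional_def by blast
        ultimately show ?thesis by simp
      next
        case False
        then have "(z!n) a = None" using zn by simp
        then show ?thesis using thetaH_take_Suc_None[OF True] Suc.IH by simp
      qed
    next
      case False
      then show ?thesis using Suc.IH by simp
    qed
  qed
  from this[of "length z"] show ?thesis by simp
qed

lemma comp_sub:
  assumes gm: "gradual_mechanism N X Theta f G" and bN: "b \<in> N" and h: "h \<in> hists G" and h': "h' \<in> hists G"
    and p: "prefix (experience G b h) (experience G b h')"
  shows "thetaH Theta b h' \<subseteq> thetaH Theta b h"
proof -
  have gf: "game_form N G" by (rule gm_gf[OF gm])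
  show ?thesis
  proof (cases "experience G b h = []")
    case True
    then show ?thesis using thetaH_exp[OF gf h, of Theta b] thetaH_sub_Theta[OF gm h'] by simp
  next
    case False
    define L where "L = length (experience G b h)"
    have L: "0 < L" using False unfolding L_def by simp
    have LL: "L \<le> length (experience G b h')" using prefix_length_le[OF p] unfolding L_def by simp
    then have l1: "L - 1 < length (experience G b h')" using L by simp
    obtain k where k: "k<length h'" "b \<in> movers G (take k h')"
      "experience G b h' ! (L-1) = (infoset_of G b (take k h'), the ((h'!k) b))"
      using exp_entry[OF l1] by blast
    obtain x where x: "(h'!k) b = Some x" using gf_act[OF gf h' k(1), of b] k(2) by blast
    have "thetaH Theta b h' \<subseteq> thetaH Theta b (take (Suc k) h')"
      using thetaH_take_mono[OF gm h', of "Suc k" "length h'" b] k(1) by simp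
    also have "\<dots> = x" by (rule thetaH_take_Suc[OF k(1) x])
    also have "x = snd (experience G b h' ! (L-1))" using k(3) x by simp
    also have "\<dots> = snd (experience G b h ! (L-1))"
    proof -
      have "experience G b h = take L (experience G b h')" using prefix_take[OF p] unfolding L_def by simp
      then show ?thesis using L by simp
    qed
    also have "\<dots> = thetaH Theta b h"
      using thetaH_exp[OF gf h, of Theta b] False unfolding L_def by (simp add: last_conv_nth)
    finally show ?thesis .
  qed
qed



lemma imm_exp:
  assumes gf: "game_form N G" and I: "I \<in> infos G b" and J: "J \<in> infos G b"
    and imm: "immediate_succ G b I J" and gI: "gI \<in> I" and gJ: "gJ \<in> J"
  shows "experience G b gJ = experience G b gI @ [(I, thetaI Theta b J)]"
proof -
  obtain g g' where gg: "g \<in> I" "g' \<in> J" "strict_prefix g g'"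
    using imm unfolding immediate_succ_def info_prec_def by blast
  define n where "n = length g"
  have gn: "g = take n g'" "n < length g'" using sp_D[OF gg(3)] unfolding n_def by auto
  have dg: "g \<in> decnodes G b" by (rule infos_dec[OF gf I gg(1)])
  have mv: "b \<in> movers G (take n g')" using dg gn(1) by (simp add: decnodes_def)
  have key: "length (experience G b (take n g')) < length (experience G b g') \<and>
    experience G b g' ! length (experience G b (take n g')) = (infoset_of G b (take n g'), the ((g'!n) b))"
    by (rule exp_key[OF gn(2) mv])
  have io: "infoset_of G b g = I" by (rule infoset_of_eq[OF gf I gg(1)])
  define L where "L = length (experience G b g)"
  have key2: "L < length (experience G b g')" "experience G b g' ! L = (I, the ((g'!n) b))"
    using key io unfolding L_def gn(1)[symmetric] by auto
  have pre: "prefix (experience G b g) (experience G b g')"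
    using exp_take_prefix[of G b n g'] gn(1) by simp
  have len: "length (experience G b g') = Suc L"
  proof (rule ccontr)
    assume "length (experience G b g') \<noteq> Suc L"
    then have sl: "Suc L < length (experience G b g')" using key2(1) by simp
    obtain k where k: "k<length g'" "b \<in> movers G (take k g')"
      "length (experience G b (take k g')) = Suc L"
      using exp_entry[OF sl] by blast
    have nk: "n < k"
    proof (rule ccontr)
      assume "\<not> n < k"
      then have "take k g' = take k g" using gn(1) take_take_le[of k n g'] by simp
      then have "prefix (experience G b (take k g')) (experience G b g)" using exp_take_prefix by metis
      then have "Suc L \<le> L" using k(3) prefix_length_le unfolding L_def by metis
      then show False by simp
    qed
    define q where "q = take k g'"
    have dq: "q \<in> decnodes G b" unfolding q_def by (rule decnode_take[OF gf _ k(1,2)]) (rule decnodes_hists[OF infos_dec[OF gf J gg(2)]])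
    have KK: "infoset_of G b q \<in> infos G b" "q \<in> infoset_of G b q" using infoset_of_props[OF gf dq] by auto
    have "g = take n q" unfolding q_def using gn(1) nk take_take_le[of n k g'] by simp
    moreover have "n < length q" unfolding q_def using nk k(1) by simp
    ultimately have sp1: "strict_prefix g q" using sp_take by metis
    have sp2: "strict_prefix q g'" unfolding q_def by (rule sp_take[OF k(1)])
    have "info_prec I (infoset_of G b q)" unfolding info_prec_def using gg(1) KK(2) sp1 by blast
    moreover have "info_prec (infoset_of G b q) J" unfolding info_prec_def using gg(2) KK(2) sp2 by blast
    ultimately show False using imm KK(1) unfolding immediate_succ_def by blast
  qed
  have eg': "experience G b g' = experience G b g @ [(I, the ((g'!n) b))]"
  proof -
    have "experience G b g' = take (Suc L) (experience G b g')" using len by simp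
    also have "\<dots> = take L (experience G b g') @ [experience G b g' ! L]"
      using key2(1) by (simp add: take_Suc_conv_app_nth)
    also have "take L (experience G b g') = experience G b g"
      using prefix_take[OF pre] unfolding L_def by simp
    finally show ?thesis using key2(2) by simp
  qed
  have "thetaI Theta b J = thetaH Theta b g'" by (rule thetaI_eq[OF gf J gg(2)])
  also have "\<dots> = the ((g'!n) b)"
    using thetaH_exp[OF gf decnodes_hists[OF infos_dec[OF gf J gg(2)]], of Theta b] eg' by simp
  finally have th: "thetaI Theta b J = the ((g'!n) b)" .
  have "experience G b gJ = experience G b g'" by (rule infos_exp[OF gf J gJ gg(2)])
  moreover have "experience G b gI = experience G b g" by (rule infos_exp[OF gf I gI gg(1)])
  ultimately show ?thesis using eg' th by simp
qed

lemma crux: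
  assumes gf: "game_form N G" and I: "I \<in> infos G b" and I1: "I1 \<in> infos G b" and I2: "I2 \<in> infos G b"
    and ne: "I1 \<noteq> I2" and imm1: "immediate_succ G b I I1" and imm2: "immediate_succ G b I I2"
    and th: "thetaI Theta b I1 = thetaI Theta b I2"
    and h1: "h1 \<in> I1" and h2: "h2 \<in> I2" and p1: "prefix h1 z1" and p2: "prefix h2 z2"
    and z1: "z1 \<in> terminal G" and z2: "z2 \<in> terminal G"
    and k1: "(K, x1) \<in> set (experience G b z1)" and k2: "(K, x2) \<in> set (experience G b z2)"
  shows "x1 = x2"
proof -
  obtain gI where gI: "gI \<in> I" using imm1 unfolding immediate_succ_def info_prec_def by blast
  have F1: "experience G b h1 = experience G b gI @ [(I, thetaI Theta b I1)]"
    by (rule imm_exp[OF gf I I1 imm1 gI h1])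
  have F2: "experience G b h2 = experience G b gI @ [(I, thetaI Theta b I2)]"
    by (rule imm_exp[OF gf I I2 imm2 gI h2])
  define F where "F = experience G b h1"
  have F2': "experience G b h2 = F" unfolding F_def F1 F2 th ..
  define L where "L = length F"
  define E1 where "E1 = experience G b z1"
  define E2 where "E2 = experience G b z2"
  have key: "take L E = F \<and> L < length E \<and> fst (E ! L) = J"
    if J: "J \<in> infos G b" and h: "h \<in> J" and p: "prefix h z" and z: "z \<in> terminal G"
       and e: "experience G b h = F" and E: "E = experience G b z" for J h z E
  proof -
    have dh: "h \<in> decnodes G b" by (rule infos_dec[OF gf J h])
    have "h \<noteq> z" using dh z unfolding decnodes_def nonterm_def by auto
    then have sp: "strict_prefix h z" using p by (simp add: strict_prefix_def)
    have hz: "h = take (length h) z" "length h < length z" using sp_D[OF sp] by auto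
    have mv: "b \<in> movers G (take (length h) z)" using dh hz(1) by (simp add: decnodes_def)
    have k: "length (experience G b (take (length h) z)) < length (experience G b z) \<and>
      experience G b z ! length (experience G b (take (length h) z)) = (infoset_of G b (take (length h) z), the ((z!length h) b))"
      by (rule exp_key[OF hz(2) mv])
    have io: "infoset_of G b h = J" by (rule infoset_of_eq[OF gf J h])
    have "take L E = F" using prefix_take[OF exp_take_prefix[of G b "length h" z]] hz(1) e
      unfolding E L_def by simp
    then show ?thesis using k io e hz(1)[symmetric] unfolding E L_def by simp
  qed
  have kk1: "take L E1 = F" "L < length E1" "fst (E1 ! L) = I1"
    using key[OF I1 h1 p1 z1 _ E1_def] unfolding F_def by auto
  have kk2: "take L E2 = F" "L < length E2" "fst (E2 ! L) = I2"
    using key[OF I2 h2 p2 z2 F2' E2_def] by auto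
  have node: "\<exists>l p. l < length E \<and> E ! l = (K, x) \<and> p \<in> K \<and> K \<in> infos G b \<and>
      experience G b p = take l E"
    if m: "(K, x) \<in> set E" and E: "E = experience G b z" and z: "z \<in> terminal G" for E z x
  proof -
    obtain l where l: "l < length E" "E ! l = (K, x)" using m by (auto simp: in_set_conv_nth)
    obtain k where k: "k<length z" "b \<in> movers G (take k z)" "length (experience G b (take k z)) = l"
      "E ! l = (infoset_of G b (take k z), the ((z!k) b))"
      using exp_entry[OF l(1)[unfolded E]] unfolding E by blast
    have dn: "take k z \<in> decnodes G b" by (rule decnode_take[OF gf terminal_hists[OF z] k(1,2)])
    have io: "infoset_of G b (take k z) = K" using k(4) l(2) by simp
    have "take k z \<in> K" "K \<in> infos G b" using infoset_of_props[OF gf dn] unfolding io by auto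
    moreover have "experience G b (take k z) = take l E"
      using prefix_take[OF exp_take_prefix[of G b k z]] k(3) unfolding E by simp
    ultimately show ?thesis using l by blast
  qed
  obtain l1 p1' where n1: "l1 < length E1" "E1 ! l1 = (K, x1)" "p1' \<in> K" "K \<in> infos G b"
    "experience G b p1' = take l1 E1" using node[OF k1[folded E1_def] E1_def z1] by blast
  obtain l2 p2' where n2: "l2 < length E2" "E2 ! l2 = (K, x2)" "p2' \<in> K"
    "experience G b p2' = take l2 E2" using node[OF k2[folded E2_def] E2_def z2] by blast
  have ee: "take l1 E1 = take l2 E2" using infos_exp[OF gf n1(4) n1(3) n2(3)] n1(5) n2(4) by simp
  then have l12: "l1 = l2" using n1(1) n2(1) by (metis length_take min.absorb4 min.strict_order_iff)
  show ?thesis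
  proof (cases "l1 < L")
    case True
    have "E1 ! l1 = F ! l1" using kk1(1) True by (metis nth_take)
    moreover have "E2 ! l1 = F ! l1" using kk2(1) True by (metis nth_take)
    ultimately show ?thesis using n1(2) n2(2) l12 by simp
  next
    case False
    show ?thesis
    proof (cases "l1 = L")
      case True
      then have "I1 = K" "I2 = K" using kk1(3) kk2(3) n1(2) n2(2) l12 by auto
      then show ?thesis using ne by simp
    next
      case False
      then have "L < l1" using \<open>\<not> l1 < L\<close> by simp
      then have "take l1 E1 ! L = E1 ! L" "take l2 E2 ! L = E2 ! L" using l12 by simp_all
      then have "I1 = I2" using ee kk1(3) kk2(3) by simp
      then show ?thesis using ne by simp
    qed
  qed
qed



lemma rpD:
  assumes "reaction_proof N Theta R f G" "i \<in> N" "j \<in> N" "i \<noteq> j"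
    "I \<in> infos G i" "I1 \<in> infos G i" "I2 \<in> infos G i" "I1 \<noteq> I2"
    "immediate_succ G i I I1" "immediate_succ G i I I2" "thetaI Theta i I1 = thetaI Theta i I2"
    "h1 \<in> I1" "h2 \<in> I2" "\<forall>k\<in>N - {i, j}. valid_strat G k (s k)"
    "consistent N G (N - {i, j}) s h1" "consistent N G (N - {i, j}) s h2"
    "th1 \<in> profilesH N Theta h1" "th2 \<in> profilesH N Theta h2"
    "consistent_type N Theta G (N - {i, j}) s th1" "consistent_type N Theta G (N - {i, j}) s th2"
  shows "R (th1 j) (f th1) (f th2)"
proof -
  note r = assms(1)[unfolded reaction_proof_def]
  note r1 = mp[OF bspec[OF bspec[OF r assms(2)] assms(3)] assms(4)]
  note r2 = bspec[OF bspec[OF bspec[OF r1 assms(5)] assms(6)] assms(7)]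
  note r3 = mp[OF mp[OF mp[OF mp[OF r2 assms(8)] assms(9)] assms(10)] assms(11)]
  note r4 = spec[OF bspec[OF bspec[OF r3 assms(12)] assms(13)], of s]
  note r5 = mp[OF mp[OF mp[OF r4 assms(14)] assms(15)] assms(16)]
  note r6 = mp[OF mp[OF bspec[OF bspec[OF r5 assms(17)] assms(18)] assms(19)] assms(20)]
  show ?thesis by (rule r6)
qed

lemma icD:
  assumes "incentive_compatible N Theta R G" "i \<in> N" "t \<in> Theta i"
    "valid_strat G i st" "unconditional Theta G i t st" "valid_strat G i si"
    "\<forall>j\<in>N. valid_strat G j (s j)"
  shows "R t (outc G (zpath G (s(i := st)))) (outc G (zpath G (s(i := si))))"
proof -
  note r = assms(1)[unfolded incentive_compatible_def]
  note r1 = spec[OF spec[OF spec[OF bspec[OF bspec[OF r assms(2)] assms(3)], of st], of si], of s]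
  show ?thesis by (rule mp[OF mp[OF mp[OF mp[OF r1 assms(4)] assms(5)] assms(6)] assms(7)])
qed

lemma follows_change:
  assumes "follows G P z"
    and "\<And>k m. k < length z \<Longrightarrow> m \<in> movers G (take k z) \<Longrightarrow>
          P' m (infoset_of G m (take k z)) = P m (infoset_of G m (take k z))"
  shows "follows G P' z"
  unfolding follows_def
proof (intro allI impI ext)
  fix k j assume k: "k < length z"
  show "(z ! k) j = (if j \<in> movers G (take k z) then Some (P' j (infoset_of G j (take k z))) else None)"
    using followsD[OF assms(1) k] assms(2)[OF k, of j] by simp
qed

lemma follows_set:
  assumes "follows G s h" "(K, x) \<in> set (experience G b h)"
  shows "x = s b K"
proof -
  obtain l where l: "l < length (experience G b h)" "experience G b h ! l = (K, x)"
    using assms(2) by (auto simp: in_set_conv_nth)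
  show ?thesis using follows_entry[OF assms(1) l(1)] l(2) by simp
qed

lemma on_path_entry:
  assumes "k < length z" "m \<in> movers G (take k z)"
  shows "(infoset_of G m (take k z), the ((z!k) m)) \<in> set (experience G m z)"
proof -
  have "length (experience G m (take k z)) < length (experience G m z) \<and>
    experience G m z ! length (experience G m (take k z)) = (infoset_of G m (take k z), the ((z!k) m))"
    by (rule exp_key[OF assms])
  then show ?thesis by (metis nth_mem)
qed

lemma on_path_entry_f:
  assumes "follows G P z" "k < length z" "m \<in> movers G (take k z)"
  shows "(infoset_of G m (take k z), P m (infoset_of G m (take k z))) \<in> set (experience G m z)"
  using on_path_entry[OF assms(2,3)] followsD[OF assms(1,2)] assms(3) by simp

lemma profilesH_prefix:
  assumes gm: "gradual_mechanism N X Theta f G" and z: "z \<in> hists G" and p: "prefix h z"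
    and th: "th \<in> profilesH N Theta z"
  shows "th \<in> profilesH N Theta h"
  using th unfolding profilesH_def
  by (rule rev_subsetD[OF _ PiE_mono]) (rule thetaH_prefix[OF gm z p])

lemma the_terminal:
  assumes gm: "gradual_mechanism N X Theta f G" and z: "z \<in> terminal G" and th: "th \<in> profilesH N Theta z"
  shows "(THE z. z \<in> terminal G \<and> th \<in> profilesH N Theta z) = z"
proof (rule the_equality)
  show "z \<in> terminal G \<and> th \<in> profilesH N Theta z" using z th by simp
  fix z' assume "z' \<in> terminal G \<and> th \<in> profilesH N Theta z'"
  then show "z' = z" using prof_unique[OF gm _ z _ th] by blast
qed

lemma some_profile:
  assumes gm: "gradual_mechanism N X Theta f G" and z: "z \<in> hists G"
  shows "(\<lambda>m. if m \<in> N then SOME x. x \<in> thetaH Theta m z else undefined) \<in> profilesH N Theta z"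
  unfolding profilesH_def PiE_iff
proof (intro conjI ballI)
  fix m assume mN: "m \<in> N"
  have "thetaH Theta m z \<noteq> {}" by (rule thetaH_ne[OF gm mN z])
  then show "(if m \<in> N then SOME x. x \<in> thetaH Theta m z else undefined) \<in> thetaH Theta m z"
    using mN by (simp add: some_in_eq)
next
  show "(\<lambda>m. if m \<in> N then SOME x. x \<in> thetaH Theta m z else undefined) \<in> extensional N"
    by (simp add: extensional_def)
qed



lemma valid_upd:
  "\<forall>j\<in>N. valid_strat G j (s j) \<Longrightarrow> valid_strat G a st \<Longrightarrow> \<forall>j\<in>N. valid_strat G j ((s(a := st)) j)"
  by simp

lemma rp_ic:
  assumes sp: "strategy_proof N Theta R f" and gm: "gradual_mechanism N X Theta f G"
    and rp: "reaction_proof N Theta R f G"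
  shows "incentive_compatible N Theta R G"
  unfolding incentive_compatible_def
proof (intro ballI allI impI)
  fix a t st si s
  assume aN: "a \<in> N" and t: "t \<in> Theta a" and vst: "valid_strat G a st"
    and ust: "unconditional Theta G a t st" and vsi: "valid_strat G a si"
    and vs: "\<forall>j\<in>N. valid_strat G j (s j)"
  have gf: "game_form N G" by (rule gm_gf[OF gm])
  define P1 where "P1 = s(a := st)"
  define P2 where "P2 = s(a := si)"
  have v1: "\<forall>j\<in>N. valid_strat G j (P1 j)" unfolding P1_def using vs vst by simp
  have v2: "\<forall>j\<in>N. valid_strat G j (P2 j)" unfolding P2_def using vs vsi by simp
  define z1 where "z1 = zpath G P1"
  define z2 where "z2 = zpath G P2"
  have z1: "z1 \<in> terminal G" "follows G P1 z1" using zpath_props[OF gf v1] unfolding z1_def by auto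
  have z2: "z2 \<in> terminal G" "follows G P2 z2" using zpath_props[OF gf v2] unfolding z2_def by auto
  have z1h: "z1 \<in> hists G" by (rule terminal_hists[OF z1(1)])
  have z2h: "z2 \<in> hists G" by (rule terminal_hists[OF z2(1)])
  have tz: "t \<in> thetaH Theta a z1"
    by (rule uncond_path[OF gm z1h z1(2)]) (use ust t in \<open>simp_all add: P1_def\<close>)
  have zz: "zpath G (s(a := st)) = z1" "zpath G (s(a := si)) = z2"
    unfolding z1_def z2_def P1_def P2_def by simp_all
  have P1b: "P1 b = s b" if "b \<noteq> a" for b using that unfolding P1_def by simp
  have P2b: "P2 b = s b" if "b \<noteq> a" for b using that unfolding P2_def by simp
  show "R t (outc G (zpath G (s(a := st)))) (outc G (zpath G (s(a := si))))"
  proof (cases "\<exists>b\<in>N - {a}. \<not> (prefix (experience G b z1) (experience G b z2) \<or>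
                                  prefix (experience G b z2) (experience G b z1))")
    case True
    then obtain b where bN: "b \<in> N" and ba: "b \<noteq> a" and
      par: "\<not> prefix (experience G b z1) (experience G b z2)" "\<not> prefix (experience G b z2) (experience G b z1)"
      by blast
    define E1 where "E1 = experience G b z1"
    define E2 where "E2 = experience G b z2"
    have "E1 \<parallel> E2" using par unfolding parallel_def E1_def E2_def by simp
    then obtain as c cs d ds where cd: "c \<noteq> d" "E1 = as @ c # cs" "E2 = as @ d # ds"
      using parallel_decomp by blast
    define l where "l = length as"
    have l1: "l < length E1" "E1 ! l = c" "take l E1 = as" using cd unfolding l_def by auto
    have l2: "l < length E2" "E2 ! l = d" "take l E2 = as" using cd unfolding l_def by auto
    have fe1: "snd (E1 ! k) = s b (fst (E1 ! k))" if "k < length E1" for k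
      using follows_entry[OF z1(2) that[unfolded E1_def]] P1b[OF ba] unfolding E1_def by simp
    have fe2: "snd (E2 ! k) = s b (fst (E2 ! k))" if "k < length E2" for k
      using follows_entry[OF z2(2) that[unfolded E2_def]] P2b[OF ba] unfolding E2_def by simp
    have lpos: "0 < l"
    proof (rule ccontr)
      assume "\<not> 0 < l"
      then have l0: "l = 0" by simp
      have "fst (E1 ! 0) = infoset_of G b []" using first_entry[OF gf z1(1) bN] unfolding E1_def by simp
      moreover have "fst (E2 ! 0) = infoset_of G b []" using first_entry[OF gf z2(1) bN] unfolding E2_def by simp
      ultimately have "E1 ! 0 = E2 ! 0" using fe1[of 0] fe2[of 0] l1(1) l2(1) l0 by (simp add: prod_eq_iff)
      then show False using l1(2) l2(2) cd(1) l0 by simp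
    qed
    have Kne: "fst (E1 ! l) \<noteq> fst (E2 ! l)"
    proof
      assume "fst (E1 ! l) = fst (E2 ! l)"
      then have "E1 ! l = E2 ! l" using fe1[OF l1(1)] fe2[OF l2(1)] by (simp add: prod_eq_iff)
      then show False using l1(2) l2(2) cd(1) by simp
    qed
    have prev: "E1 ! (l-1) = E2 ! (l-1)"
    proof -
      have "E1 ! (l-1) = take l E1 ! (l-1)" using lpos by simp
      also have "\<dots> = take l E2 ! (l-1)" using l1(3) l2(3) by simp
      also have "\<dots> = E2 ! (l-1)" using lpos by simp
      finally show ?thesis .
    qed
    note i1 = imm_from_path[OF gf z1h lpos l1(1)[unfolded E1_def], of Theta, folded E1_def]
    note i2 = imm_from_path[OF gf z2h lpos l2(1)[unfolded E2_def], of Theta, folded E2_def]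
    define I where "I = fst (E1 ! (l-1))"
    define K1 where "K1 = fst (E1 ! l)"
    define K2 where "K2 = fst (E2 ! l)"
    have I: "I \<in> infos G b" using i1 unfolding I_def by simp
    have K1: "K1 \<in> infos G b" "immediate_succ G b I K1" "thetaI Theta b K1 = snd (E1 ! (l-1))"
      using i1 unfolding I_def K1_def by auto
    have K2: "K2 \<in> infos G b" "immediate_succ G b I K2" "thetaI Theta b K2 = snd (E1 ! (l-1))"
      using i2 prev unfolding I_def K2_def by auto
    obtain h1 where h1: "h1 \<in> K1" "prefix h1 z1" using i1 unfolding K1_def by blast
    obtain h2 where h2: "h2 \<in> K2" "prefix h2 z2" using i2 unfolding K2_def by blast
    define th1 where "th1 = (\<lambda>m. if m \<in> N then (if m = a then t else SOME x. x \<in> thetaH Theta m z1) else undefined)"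
    have th1z: "th1 \<in> profilesH N Theta z1"
      unfolding profilesH_def PiE_iff
    proof (intro conjI ballI)
      fix m assume mN: "m \<in> N"
      have "thetaH Theta m z1 \<noteq> {}" by (rule thetaH_ne[OF gm mN z1h])
      then show "th1 m \<in> thetaH Theta m z1" using mN tz unfolding th1_def by (simp add: some_in_eq)
    next
      show "th1 \<in> extensional N" unfolding th1_def by (simp add: extensional_def)
    qed
    define th2 where "th2 = (\<lambda>m. if m \<in> N then SOME x. x \<in> thetaH Theta m z2 else undefined)"
    have th2z: "th2 \<in> profilesH N Theta z2" unfolding th2_def by (rule some_profile[OF gm z2h])
    have vM: "\<forall>k\<in>N - {b, a}. valid_strat G k (s k)" using vs by simp
    have cons: "consistent N G (N - {b, a}) s h" if "prefix h (zpath G P)" "P = s(a := x)"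
      "\<forall>j\<in>N. valid_strat G j (P j)" for h P x
      unfolding consistent_def using that by (intro exI[of _ P]) auto
    have c1: "consistent N G (N - {b, a}) s h1"
      by (rule cons[OF _ P1_def v1]) (use h1(2) z1_def in simp)
    have c2: "consistent N G (N - {b, a}) s h2"
      by (rule cons[OF _ P2_def v2]) (use h2(2) z2_def in simp)
    have ct1: "consistent_type N Theta G (N - {b, a}) s th1"
      unfolding consistent_type_def the_terminal[OF gm z1(1) th1z]
      by (rule cons[OF _ P1_def v1]) (simp add: z1_def)
    have ct2: "consistent_type N Theta G (N - {b, a}) s th2"
      unfolding consistent_type_def the_terminal[OF gm z2(1) th2z]
      by (rule cons[OF _ P2_def v2]) (simp add: z2_def)
    have th1h: "th1 \<in> profilesH N Theta h1" by (rule profilesH_prefix[OF gm z1h h1(2) th1z])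
    have th2h: "th2 \<in> profilesH N Theta h2" by (rule profilesH_prefix[OF gm z2h h2(2) th2z])
    have "R (th1 a) (f th1) (f th2)"
      by (rule rpD[OF rp bN aN ba I K1(1) K2(1) _ K1(2) K2(2) _ h1(1) h2(1) vM c1 c2 th1h th2h ct1 ct2])
        (use Kne K1(3) K2(3) in \<open>simp_all add: K1_def K2_def\<close>)
    moreover have "th1 a = t" using aN unfolding th1_def by simp
    moreover have "outc G z1 = f th1" by (rule gm_outc1[OF gm z1(1) th1z])
    moreover have "outc G z2 = f th2" by (rule gm_outc1[OF gm z2(1) th2z])
    ultimately show ?thesis unfolding zz by simp
  next
    case False
    then have comp: "prefix (experience G b z1) (experience G b z2) \<or> prefix (experience G b z2) (experience G b z1)"
      if "b \<in> N" "b \<noteq> a" for b using that by blast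
    have ne: "thetaH Theta b z1 \<inter> thetaH Theta b z2 \<noteq> {}" if bN: "b \<in> N" "b \<noteq> a" for b
    proof -
      have n1: "thetaH Theta b z1 \<noteq> {}" by (rule thetaH_ne[OF gm bN(1) z1h])
      have n2: "thetaH Theta b z2 \<noteq> {}" by (rule thetaH_ne[OF gm bN(1) z2h])
      show ?thesis
      proof (cases "prefix (experience G b z1) (experience G b z2)")
        case True
        then have "thetaH Theta b z2 \<subseteq> thetaH Theta b z1" by (rule comp_sub[OF gm bN(1) z1h z2h])
        then show ?thesis using n2 by blast
      next
        case False
        then have "prefix (experience G b z2) (experience G b z1)" using comp[OF bN] by simp
        then have "thetaH Theta b z1 \<subseteq> thetaH Theta b z2" by (rule comp_sub[OF gm bN(1) z2h z1h])
        then show ?thesis using n1 by blast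
      qed
    qed
    define th1 where "th1 = (\<lambda>m. if m \<in> N then (if m = a then t else
          SOME x. x \<in> thetaH Theta m z1 \<inter> thetaH Theta m z2) else undefined)"
    define x2 where "x2 = (SOME x. x \<in> thetaH Theta a z2)"
    have x2: "x2 \<in> thetaH Theta a z2" unfolding x2_def using thetaH_ne[OF gm aN z2h] by (simp add: some_in_eq)
    define th2 where "th2 = th1(a := x2)"
    have th1m: "th1 m \<in> thetaH Theta m z1 \<inter> thetaH Theta m z2" if "m \<in> N" "m \<noteq> a" for m
    proof -
      have "(SOME x. x \<in> thetaH Theta m z1 \<inter> thetaH Theta m z2) \<in> thetaH Theta m z1 \<inter> thetaH Theta m z2"
        unfolding some_in_eq by (rule ne[OF that])
      moreover have "th1 m = (SOME x. x \<in> thetaH Theta m z1 \<inter> thetaH Theta m z2)"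
        using that unfolding th1_def by simp
      ultimately show ?thesis by simp
    qed
    have ext1: "th1 \<in> extensional N" unfolding th1_def by (simp add: extensional_def)
    have th1z: "th1 \<in> profilesH N Theta z1"
      unfolding profilesH_def PiE_iff
    proof (intro conjI ballI ext1)
      fix m assume mN: "m \<in> N"
      show "th1 m \<in> thetaH Theta m z1"
      proof (cases "m = a")
        case True then show ?thesis using tz aN unfolding th1_def by simp
      next
        case False then show ?thesis using th1m[OF mN False] by simp
      qed
    qed
    have th2z: "th2 \<in> profilesH N Theta z2"
      unfolding profilesH_def PiE_iff
    proof (intro conjI ballI)
      fix m assume mN: "m \<in> N"
      show "th2 m \<in> thetaH Theta m z2"
      proof (cases "m = a")
        case True then show ?thesis using x2 unfolding th2_def by simp
      next
        case False then show ?thesis using th1m[OF mN False] unfolding th2_def by simp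
      qed
    next
      show "th2 \<in> extensional N" using ext1 aN unfolding th2_def extensional_def by simp
    qed
    have th1P: "th1 \<in> PiE N Theta"
      unfolding PiE_iff
    proof (intro conjI ballI ext1)
      fix m assume mN: "m \<in> N"
      show "th1 m \<in> Theta m" using profilesH_mem[OF th1z mN] thetaH_sub_Theta[OF gm z1h] by blast
    qed
    have x2T: "x2 \<in> Theta a" using x2 thetaH_sub_Theta[OF gm z2h] by blast
    have "R (th1 a) (f th1) (f (th1(a := x2)))"
      using sp aN th1P x2T unfolding strategy_proof_def by blast
    moreover have "th1 a = t" using aN unfolding th1_def by simp
    moreover have "outc G z1 = f th1" by (rule gm_outc1[OF gm z1(1) th1z])
    moreover have "outc G z2 = f th2" by (rule gm_outc1[OF gm z2(1) th2z])
    ultimately show ?thesis unfolding zz th2_def by simp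
  qed
qed



lemma cons_terminal:
  assumes gm: "gradual_mechanism N X Theta f G" and h: "h \<in> hists G" and th: "th \<in> profilesH N Theta h"
    and ct: "consistent_type N Theta G M s th"
  shows "\<exists>z s'. z \<in> terminal G \<and> prefix h z \<and> th \<in> profilesH N Theta z \<and>
     (\<forall>i\<in>N. valid_strat G i (s' i)) \<and> (\<forall>i\<in>M. \<forall>I\<in>infos G i. s' i I = s i I) \<and>
     follows G s' z"
proof -
  have gf: "game_form N G" by (rule gm_gf[OF gm])
  obtain z where z: "z \<in> terminal G" "prefix h z" "th \<in> profilesH N Theta z"
    using prof_exists[OF gm h th] by blast
  have "consistent N G M s z" using ct unfolding consistent_type_def the_terminal[OF gm z(1) z(3)] .
  then obtain s' where s': "\<forall>i\<in>N. valid_strat G i (s' i)" "\<forall>i\<in>M. \<forall>I\<in>infos G i. s' i I = s i I"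
    "prefix z (zpath G s')" unfolding consistent_def by blast
  have zp: "zpath G s' \<in> terminal G" "follows G s' (zpath G s')" using zpath_props[OF gf s'(1)] by auto
  have "zpath G s' = z" by (rule terminal_prefix_eq[OF z(1) terminal_hists[OF zp(1)] s'(3)])
  then show ?thesis using z s' zp by metis
qed

lemma ic_rp:
  assumes gm: "gradual_mechanism N X Theta f G" and ic: "incentive_compatible N Theta R G"
  shows "reaction_proof N Theta R f G"
  unfolding reaction_proof_def
proof (intro ballI allI impI)
  fix b a I I1 I2 h1 h2 s th1 th2
  assume bN: "b \<in> N" and aN: "a \<in> N" and ba: "b \<noteq> a" and I: "I \<in> infos G b"
    and I1: "I1 \<in> infos G b" and I2: "I2 \<in> infos G b" and ne: "I1 \<noteq> I2"
    and imm1: "immediate_succ G b I I1" and imm2: "immediate_succ G b I I2"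
    and thI: "thetaI Theta b I1 = thetaI Theta b I2" and h1: "h1 \<in> I1" and h2: "h2 \<in> I2"
    and vs: "\<forall>k\<in>N - {b, a}. valid_strat G k (s k)"
    and cs1: "consistent N G (N - {b, a}) s h1" and cs2: "consistent N G (N - {b, a}) s h2"
    and th1: "th1 \<in> profilesH N Theta h1" and th2: "th2 \<in> profilesH N Theta h2"
    and ct1: "consistent_type N Theta G (N - {b, a}) s th1"
    and ct2: "consistent_type N Theta G (N - {b, a}) s th2"
  have gf: "game_form N G" by (rule gm_gf[OF gm])
  have h1h: "h1 \<in> hists G" by (rule decnodes_hists[OF infos_dec[OF gf I1 h1]])
  have h2h: "h2 \<in> hists G" by (rule decnodes_hists[OF infos_dec[OF gf I2 h2]])
  obtain z1 s1 where z1: "z1 \<in> terminal G" "prefix h1 z1" "th1 \<in> profilesH N Theta z1"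
    and s1: "\<forall>i\<in>N. valid_strat G i (s1 i)" "\<forall>i\<in>N - {b, a}. \<forall>I\<in>infos G i. s1 i I = s i I"
    and f1: "follows G s1 z1"
    using cons_terminal[OF gm h1h th1 ct1] by blast
  obtain z2 s2 where z2: "z2 \<in> terminal G" "prefix h2 z2" "th2 \<in> profilesH N Theta z2"
    and s2: "\<forall>i\<in>N. valid_strat G i (s2 i)" "\<forall>i\<in>N - {b, a}. \<forall>I\<in>infos G i. s2 i I = s i I"
    and f2: "follows G s2 z2"
    using cons_terminal[OF gm h2h th2 ct2] by blast
  have z1h: "z1 \<in> hists G" by (rule terminal_hists[OF z1(1)])
  have z2h: "z2 \<in> hists G" by (rule terminal_hists[OF z2(1)])
  define t where "t = th1 a"
  have tz: "t \<in> thetaH Theta a z1" unfolding t_def by (rule profilesH_mem[OF z1(3) aN])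
  have tT: "t \<in> Theta a" using tz thetaH_sub_Theta[OF gm z1h] by blast
  define E1 where "E1 = experience G b z1"
  define E2 where "E2 = experience G b z2"
  define sb where "sb = (\<lambda>K. if \<exists>x. (K, x) \<in> set E1 then s1 b K else if \<exists>x. (K, x) \<in> set E2 then s2 b K else s1 b K)"
  define st where "st = (\<lambda>K. if \<exists>x\<in>acts G a (SOME h. h \<in> K). t \<in> x
      then SOME x. x \<in> acts G a (SOME h. h \<in> K) \<and> t \<in> x else s1 a K)"
  have vb1: "valid_strat G b (s1 b)" using s1(1) bN by simp
  have vb2: "valid_strat G b (s2 b)" using s2(1) bN by simp
  have va1: "valid_strat G a (s1 a)" using s1(1) aN by simp
  have va2: "valid_strat G a (s2 a)" using s2(1) aN by simp
  have vsb: "valid_strat G b sb" using vb1 vb2 unfolding valid_strat_def sb_def by simp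
  have st_some: "st K \<in> acts G a (SOME h. h \<in> K) \<and> t \<in> st K"
    if "\<exists>x\<in>acts G a (SOME h. h \<in> K). t \<in> x" for K
  proof -
    have "\<exists>x. x \<in> acts G a (SOME h. h \<in> K) \<and> t \<in> x" using that by blast
    from someI_ex[OF this] show ?thesis using that unfolding st_def by simp
  qed
  have vst: "valid_strat G a st"
    unfolding valid_strat_def
  proof
    fix K assume K: "K \<in> infos G a"
    show "st K \<in> acts G a (SOME h. h \<in> K)"
    proof (cases "\<exists>x\<in>acts G a (SOME h. h \<in> K). t \<in> x")
      case True then show ?thesis using st_some by blast
    next
      case False then show ?thesis using va1 K unfolding st_def valid_strat_def by simp
    qed
  qed
  have some_acts: "acts G a (SOME h'. h' \<in> infoset_of G a h) = acts G a h" if dn: "h \<in> decnodes G a" for h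
  proof -
    have KK: "infoset_of G a h \<in> infos G a" "h \<in> infoset_of G a h" using infoset_of_props[OF gf dn] by auto
    have "(SOME h'. h' \<in> infoset_of G a h) \<in> infoset_of G a h" using KK(2) by (rule someI)
    note ia = infos_acts[OF gf KK(1) this KK(2)]
    show ?thesis using ia by simp
  qed
  have ust: "unconditional Theta G a t st"
    unfolding unconditional_def
  proof (intro ballI impI)
    fix h assume dn: "h \<in> decnodes G a" and th: "t \<in> thetaH Theta a h"
    have "\<Union>(acts G a h) = thetaH Theta a h" using gm_act[OF gm dn] by simp
    then have "\<exists>x\<in>acts G a (SOME h'. h' \<in> infoset_of G a h). t \<in> x" using th some_acts[OF dn] by auto
    then show "t \<in> st (infoset_of G a h)" using st_some by blast
  qed
  define S where "S = s1(b := sb)"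
  have vS: "\<forall>j\<in>N. valid_strat G j (S j)" using s1(1) vsb unfolding S_def by simp
  have R0: "R t (outc G (zpath G (S(a := st)))) (outc G (zpath G (S(a := s2 a))))"
    by (rule icD[OF ic aN tT vst ust va2 vS])
  have F1: "follows G (S(a := st)) z1"
  proof (rule follows_change[OF f1])
    fix k m assume k: "k < length z1" and mv: "m \<in> movers G (take k z1)"
    define K where "K = infoset_of G m (take k z1)"
    have dn: "take k z1 \<in> decnodes G m" by (rule decnode_take[OF gf z1h k mv])
    have zk: "(z1!k) m = Some (s1 m K)" using followsD[OF f1 k] mv unfolding K_def by simp
    show "(S(a := st)) m K = s1 m K" unfolding K_def[symmetric]
    proof (cases "m = a")
      case True
      have "thetaH Theta a z1 \<subseteq> thetaH Theta a (take (Suc k) z1)"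
        using thetaH_take_mono[OF gm z1h, of "Suc k" "length z1" a] k by simp
      also have "\<dots> = s1 a K" using thetaH_take_Suc[OF k zk[unfolded True]] .
      finally have t1: "t \<in> s1 a K" using tz by blast
      have dna: "take k z1 \<in> decnodes G a" using dn True by simp
      have KI: "K \<in> infos G a" "take k z1 \<in> K" using infoset_of_props[OF gf dna] unfolding K_def True by auto
      have a1: "s1 a K \<in> acts G a (SOME h. h \<in> K)" using va1 KI(1) unfolding valid_strat_def by simp
      then have ex: "\<exists>x\<in>acts G a (SOME h. h \<in> K). t \<in> x" using t1 by blast
      have sa: "acts G a (SOME h. h \<in> K) = acts G a (take k z1)"
        using some_acts[OF dna] unfolding K_def True .
      have dj: "disjoint (acts G a (take k z1))" using gm_act[OF gm dna] by simp
      have "st K = s1 a K"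
      proof (rule ccontr)
        assume "st K \<noteq> s1 a K"
        then have "st K \<inter> s1 a K = {}" using disjointD[OF dj] st_some[OF ex] a1 sa by simp
        then show False using st_some[OF ex] t1 by blast
      qed
      then show ?thesis using True by simp
    next
      case False
      show ?thesis
      proof (cases "m = b")
        case True
        have "(K, s1 b K) \<in> set E1" using on_path_entry_f[OF f1 k mv] unfolding E1_def K_def True .
        then show ?thesis using False True unfolding S_def sb_def by auto
      next
        case False2: False
        then show ?thesis using False unfolding S_def by simp
      qed
    qed
  qed
  have F2: "follows G (S(a := s2 a)) z2"
  proof (rule follows_change[OF f2])
    fix k m assume k: "k < length z2" and mv: "m \<in> movers G (take k z2)"
    define K where "K = infoset_of G m (take k z2)"
    have dn: "take k z2 \<in> decnodes G m" by (rule decnode_take[OF gf z2h k mv])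
    have mN: "m \<in> N" by (rule decnodes_N[OF gf dn])
    have KI: "K \<in> infos G m" using infoset_of_props[OF gf dn] unfolding K_def by auto
    show "(S(a := s2 a)) m K = s2 m K" unfolding K_def[symmetric]
    proof (cases "m = a")
      case True then show ?thesis by simp
    next
      case False
      show ?thesis
      proof (cases "m = b")
        case True
        have e2: "(K, s2 b K) \<in> set E2" using on_path_entry_f[OF f2 k mv] unfolding E2_def K_def True .
        have "sb K = s2 b K"
        proof (cases "\<exists>x. (K, x) \<in> set E1")
          case True
          then obtain x where x: "(K, x) \<in> set E1" by blast
          have "x = s1 b K" using follows_set[OF f1 x[unfolded E1_def]] .
          moreover have "x = s2 b K"
            by (rule crux[OF gf I I1 I2 ne imm1 imm2 thI h1 h2 z1(2) z2(2) z1(1) z2(1)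
                  x[unfolded E1_def] e2[unfolded E2_def]])
          ultimately show ?thesis using True unfolding sb_def by simp
        next
          case False
          then show ?thesis using e2 unfolding sb_def by auto
        qed
        then show ?thesis using \<open>m \<noteq> a\<close> True unfolding S_def by simp
      next
        case False2: False
        have "s1 m K = s m K" "s2 m K = s m K" using s1(2) s2(2) mN False False2 KI by auto
        then show ?thesis using False False2 unfolding S_def by simp
      qed
    qed
  qed
  have zz1: "zpath G (S(a := st)) = z1" by (rule zpath_eq[OF z1(1) F1])
  have zz2: "zpath G (S(a := s2 a)) = z2" by (rule zpath_eq[OF z2(1) F2])
  have "outc G z1 = f th1" by (rule gm_outc1[OF gm z1(1) z1(3)])
  moreover have "outc G z2 = f th2" by (rule gm_outc1[OF gm z2(1) z2(3)])
  ultimately show "R (th1 a) (f th1) (f th2)" using R0 unfolding zz1 zz2 t_def by simp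
qed


theorem theorem2:
  fixes N :: "'i set" and X :: "'x set" and Theta :: "'i \<Rightarrow> 't set"
    and R :: "'t \<Rightarrow> 'x \<Rightarrow> 'x \<Rightarrow> bool" and f :: "('i \<Rightarrow> 't) \<Rightarrow> 'x"
    and G :: "('i,'t,'x) gform"
  assumes "setting N X Theta R"
    and "scf N X Theta f"
    and "strategy_proof N Theta R f"
    and "gradual_mechanism N X Theta f G"
  shows "incentive_compatible N Theta R G \<longleftrightarrow> reaction_proof N Theta R f G"
proof
  assume "incentive_compatible N Theta R G"
  then show "reaction_proof N Theta R f G" by (rule ic_rp[OF assms(4)])
next
  assume "reaction_proof N Theta R f G"
  then show "incentive_compatible N Theta R G" by (rule rp_ic[OF assms(3,4)])
qed

end
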